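(* Let $k[X,Y]$ be the polynomial ring over a field $k$, and let $R_1 = k[X^4, XY^3, Y^4]$ and $R_2 = k[X^5, XY^4, Y^5]$. Then for each $i=1,2$, $R_i \subsetneq R_i^a = R_i^*$, where $R_i^*$ is the strict closure of $R_i$ in $\overline{R_i}$ and $R_i^a$ is the weakly Arf closure of $R_i$. (Explicitly, $R_1^* = R_1 + R_1X^7Y^5$ and $R_2^* = R_2 + R_2X^9Y^6 + R_2X^8Y^7 + R_2X^4Y^{11}$.)
   Context: For a commutative ring $A$, $W(A)$ is the set of non-zerodivisors of $A$, $\mathrm{Q}(A)$ the total ring of fractions and $\overline A$ the integral closure of $A$ in $\mathrm{Q}(A)$. The strict closure of $A$ in $B\supseteq A$ is $\{\alpha \in B \mid \alpha\otimes 1 = 1\otimes \alpha \text{ in } B\otimes_A B\}$. Weakly Arf closure: set $A_1 = A[\frac{yz}{x} \mid x\in W(A),\ y,z\in A,\ \frac{y}{x},\frac{z}{x}\in\overline A] \subseteq \mathrm{Q}(A)$, define recursively $A_0 = A$, $A_n = (A_{n-1})_1$ for $n>0$, and $A^a = \bigcup_{n\ge 0} A_n$; this is the smallest weakly Arf ring between $A$ and $\overline A$, where $A$ is weakly Arf if for all $x,y,z\in A$ with $x\in W(A)$ and $\frac yx,\frac zx\in\overline A$ one has $\frac{yz}{x}\in A$. *)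

theory Defs
  imports "HOL-Computational_Algebra.Polynomial" "HOL-Computational_Algebra.Fraction_Field"
begin

text \<open>All rings considered are subrings (given as carrier sets) of an ambient field 'F.\<close>

inductive_set ring_gen :: "'F::field set \<Rightarrow> 'F set" for S where
  base: "s \<in> S \<Longrightarrow> s \<in> ring_gen S"
| one: "1 \<in> ring_gen S"
| add: "a \<in> ring_gen S \<Longrightarrow> b \<in> ring_gen S \<Longrightarrow> a + b \<in> ring_gen S"
| neg: "a \<in> ring_gen S \<Longrightarrow> - a \<in> ring_gen S"
| mult: "a \<in> ring_gen S \<Longrightarrow> b \<in> ring_gen S \<Longrightarrow> a * b \<in> ring_gen S"

definition nzd :: "'F::field set \<Rightarrow> 'F set" where
  "nzd A = {x \<in> A. \<forall>y\<in>A. x * y = 0 \<longrightarrow> y = 0}"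

definition total_quot :: "'F::field set \<Rightarrow> 'F set" where
  "total_quot A = {y / x | x y. x \<in> nzd A \<and> y \<in> A}"

definition int_closure :: "'F::field set \<Rightarrow> 'F set" where
  "int_closure A = {\<alpha> \<in> total_quot A. \<exists>p::'F poly. lead_coeff p = 1 \<and>
      (\<forall>i. coeff p i \<in> A) \<and> poly p \<alpha> = 0}"

definition arf_step :: "'F::field set \<Rightarrow> 'F set" where
  "arf_step A = ring_gen (A \<union> {y * z / x | x y z. x \<in> nzd A \<and> y \<in> A \<and> z \<in> A \<and>
        y / x \<in> int_closure A \<and> z / x \<in> int_closure A})"

definition arf_closure :: "'F::field set \<Rightarrow> 'F set" where
  "arf_closure A = (\<Union>n. (arf_step ^^ n) A)"

text \<open>Tensor product B \<otimes>_A B presented as the free abelian group on B \<times> B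
  (finitely supported int-valued functions) modulo the subgroup generated by the
  biadditivity relations and the A-balancing relations.\<close>
definition single :: "'b \<Rightarrow> 'b \<Rightarrow> int" where
  "single p = (\<lambda>q. if q = p then 1 else 0)"

inductive_set tensor_rel :: "'F::field set \<Rightarrow> 'F set \<Rightarrow> ('F \<times> 'F \<Rightarrow> int) set"
  for A B where
  addL: "b \<in> B \<Longrightarrow> b' \<in> B \<Longrightarrow> c \<in> B \<Longrightarrow>
     (\<lambda>q. single (b + b', c) q - single (b, c) q - single (b', c) q) \<in> tensor_rel A B"
| addR: "b \<in> B \<Longrightarrow> c \<in> B \<Longrightarrow> c' \<in> B \<Longrightarrow>
     (\<lambda>q. single (b, c + c') q - single (b, c) q - single (b, c') q) \<in> tensor_rel A B"
| bal: "a \<in> A \<Longrightarrow> b \<in> B \<Longrightarrow> c \<in> B \<Longrightarrow>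
     (\<lambda>q. single (a * b, c) q - single (b, a * c) q) \<in> tensor_rel A B"
| zero: "(\<lambda>q. 0) \<in> tensor_rel A B"
| plus: "f \<in> tensor_rel A B \<Longrightarrow> g \<in> tensor_rel A B \<Longrightarrow> (\<lambda>q. f q + g q) \<in> tensor_rel A B"
| uminus: "f \<in> tensor_rel A B \<Longrightarrow> (\<lambda>q. - f q) \<in> tensor_rel A B"

text \<open>Strict closure of A in B: \<alpha> \<otimes> 1 = 1 \<otimes> \<alpha> in B \<otimes>_A B.\<close>
definition strict_closure :: "'F::field set \<Rightarrow> 'F set \<Rightarrow> 'F set" where
  "strict_closure A B = {\<alpha> \<in> B. (\<lambda>q. single (\<alpha>, 1) q - single (1, \<alpha>) q) \<in> tensor_rel A B}"

text \<open>k[X,Y] realised as k[X][Y] inside its fraction field k(X,Y).\<close>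
definition emb :: "'k::field poly poly \<Rightarrow> 'k poly poly fract" where
  "emb p = Fract p 1"

definition varX :: "'k::field poly poly fract" where "varX = emb [:[:0, 1:]:]"
definition varY :: "'k::field poly poly fract" where "varY = emb [:0, 1:]"

definition constants :: "'k::field poly poly fract set" where
  "constants = {emb [:[:c:]:] | c. True}"

definition kalg :: "'k::field poly poly fract set \<Rightarrow> 'k poly poly fract set" where
  "kalg G = ring_gen (constants \<union> G)"

end

theory Submission
  imports Defs "HOL-Computational_Algebra.Polynomial_Factorial" "HOL-Computational_Algebra.Field_as_Ring"
    "HOL-Library.Function_Algebras"
begin


typedef ('a::field) fw = "UNIV :: 'a set" morphisms rep_fw abs_fw by auto
setup_lifting type_definition_fw

instantiation fw :: (field) field
begin
lift_definition zero_fw :: "'a fw" is 0 .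
lift_definition one_fw :: "'a fw" is 1 .
lift_definition plus_fw :: "'a fw \<Rightarrow> 'a fw \<Rightarrow> 'a fw" is "(+)" .
lift_definition minus_fw :: "'a fw \<Rightarrow> 'a fw \<Rightarrow> 'a fw" is "(-)" .
lift_definition uminus_fw :: "'a fw \<Rightarrow> 'a fw" is "uminus" .
lift_definition times_fw :: "'a fw \<Rightarrow> 'a fw \<Rightarrow> 'a fw" is "(*)" .
lift_definition inverse_fw :: "'a fw \<Rightarrow> 'a fw" is "inverse" .
lift_definition divide_fw :: "'a fw \<Rightarrow> 'a fw \<Rightarrow> 'a fw" is "(/)" .
instance by standard (transfer; auto simp: field_simps)+
end

instantiation fw :: (field)
  "{unique_euclidean_ring, normalization_euclidean_semiring, normalization_semidom_multiplicative}"
begin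
definition [simp]: "normalize_fw = (normalize_field :: 'a fw \<Rightarrow> _)"
definition [simp]: "unit_factor_fw = (unit_factor_field :: 'a fw \<Rightarrow> _)"
definition [simp]: "modulo_fw = (mod_field :: 'a fw \<Rightarrow> _)"
definition [simp]: "euclidean_size_fw = (euclidean_size_field :: 'a fw \<Rightarrow> _)"
definition [simp]: "division_segment (x :: 'a fw) = 1"
instance
  by standard
    (simp_all add: dvd_field_iff field_split_simps split: if_splits)
end

instantiation fw :: (field) euclidean_ring_gcd
begin
definition gcd_fw :: "'a fw \<Rightarrow> 'a fw \<Rightarrow> 'a fw" where
  "gcd_fw = Euclidean_Algorithm.gcd"
definition lcm_fw :: "'a fw \<Rightarrow> 'a fw \<Rightarrow> 'a fw" where
  "lcm_fw = Euclidean_Algorithm.lcm"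
definition Gcd_fw :: "'a fw set \<Rightarrow> 'a fw" where
 "Gcd_fw = Euclidean_Algorithm.Gcd"
definition Lcm_fw :: "'a fw set \<Rightarrow> 'a fw" where
 "Lcm_fw = Euclidean_Algorithm.Lcm"
instance by standard (simp_all add: gcd_fw_def lcm_fw_def Gcd_fw_def Lcm_fw_def)
end

instance fw :: (field) field_gcd ..

term "gcd (p::'k::field fw poly poly) q"


definition cf :: "'k::field poly poly \<Rightarrow> nat \<Rightarrow> nat \<Rightarrow> 'k" where
  "cf p i j = coeff (coeff p j) i"

definition mono :: "nat \<Rightarrow> nat \<Rightarrow> 'k::field poly poly" where
  "mono i j = monom (monom 1 i) j"

lemma cf_add[simp]: "cf (p+q) i j = cf p i j + cf q i j" by (simp add: cf_def)
lemma cf_diff[simp]: "cf (p-q) i j = cf p i j - cf q i j" by (simp add: cf_def)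
lemma cf_uminus[simp]: "cf (-p) i j = - cf p i j" by (simp add: cf_def)
lemma cf_0[simp]: "cf 0 i j = 0" by (simp add: cf_def)
lemma cf_1: "cf 1 i j = (if i = 0 \<and> j = 0 then 1 else 0)"
  by (simp add: cf_def coeff_1)
lemma cf_eqI: "(\<And>i j. cf p i j = cf q i j) \<Longrightarrow> p = q"
  by (auto simp: cf_def poly_eq_iff)
lemma cf_mono: "cf (mono i j) a b = (if a = i \<and> b = j then 1 else 0)"
  by (simp add: cf_def mono_def coeff_monom)
lemma mono_mult: "mono i j * mono i' j' = (mono (i+i') (j+j') :: 'k::field poly poly)"
  by (simp add: mono_def mult_monom)
lemma mono_pow: "mono i j ^ k = (mono (k*i) (k*j) :: 'k::field poly poly)"
  by (simp add: mono_def monom_power mult.commute)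
lemma mono_00: "mono 0 0 = 1" by (simp add: mono_def)

lemma cf_mult: "cf (p*q) i j = (\<Sum>j'\<le>j. \<Sum>i'\<le>i. cf p i' j' * cf q (i-i') (j-j'))"
  by (simp add: cf_def coeff_mult coeff_sum)

lemma cf_monom_mult: "cf (mono a b * q) i j = (if a \<le> i \<and> b \<le> j then cf q (i-a) (j-b) else 0)"
  by (auto simp: cf_def mono_def coeff_monom_mult)

lemma emb_add: "emb (p+q) = emb p + emb q" by (simp add: emb_def)
lemma emb_mult: "emb (p*q) = emb p * emb q" by (simp add: emb_def)
lemma emb_uminus: "emb (-p) = - emb p" by (simp add: emb_def)
lemma emb_diff: "emb (p-q) = emb p - emb q" by (simp add: emb_def)
lemma emb_0: "emb 0 = 0" by (simp add: emb_def Zero_fract_def)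
lemma emb_1: "emb 1 = 1" by (simp add: emb_def One_fract_def)
lemma emb_pow: "emb (p^n) = emb p ^ n"
  by (induction n) (simp_all add: emb_1 emb_mult)
lemma emb_inj: "emb p = emb q \<longleftrightarrow> p = q" by (simp add: emb_def eq_fract)
lemma emb_eq0: "emb p = 0 \<longleftrightarrow> p = 0" using emb_inj[of p 0] by (simp add: emb_0)
lemma emb_sum: "emb (sum f A) = (\<Sum>a\<in>A. emb (f a))"
  by (induction A rule: infinite_finite_induct) (simp_all add: emb_0 emb_add)

lemma varX_eq: "varX = emb (mono 1 0)"
  by (simp add: varX_def mono_def monom_Suc monom_0 one_pCons)
lemma varY_eq: "varY = emb (mono 0 1)"
  by (simp add: varY_def mono_def monom_Suc monom_0 one_pCons)

lemma varXY: "varX ^ a * varY ^ b = emb (mono a b)"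
  by (simp add: varX_eq varY_eq emb_pow[symmetric] emb_mult[symmetric] mono_pow mono_mult)


definition Vp :: "nat \<Rightarrow> 'k::field poly poly set" where
  "Vp n = {p. \<forall>i j. cf p i j \<noteq> 0 \<longrightarrow> (i+j) mod n = 0}"

lemma VpI: "(\<And>i j. cf p i j \<noteq> 0 \<Longrightarrow> (i+j) mod n = 0) \<Longrightarrow> p \<in> Vp n"
  by (auto simp: Vp_def)
lemma VpD: "p \<in> Vp n \<Longrightarrow> (i+j) mod n \<noteq> 0 \<Longrightarrow> cf p i j = 0"
  unfolding Vp_def mem_Collect_eq by (metis (mono_tags))

lemma Vp_add: "p \<in> Vp n \<Longrightarrow> q \<in> Vp n \<Longrightarrow> p + q \<in> Vp n"
  by (rule VpI) (metis VpD cf_add add.right_neutral)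
lemma Vp_uminus: "p \<in> Vp n \<Longrightarrow> - p \<in> Vp n"
  by (rule VpI) (metis VpD cf_uminus neg_equal_0_iff_equal)
lemma Vp_diff: "p \<in> Vp n \<Longrightarrow> q \<in> Vp n \<Longrightarrow> p - q \<in> Vp n"
  by (rule VpI) (metis VpD cf_diff diff_zero)
lemma Vp_0: "0 \<in> Vp n" by (rule VpI) auto
lemma Vp_1: "1 \<in> Vp n" by (rule VpI) (auto simp: cf_1 split: if_splits)
lemma Vp_mono: "(i+j) mod n = 0 \<Longrightarrow> mono i j \<in> Vp n"
  by (rule VpI) (auto simp: cf_mono split: if_splits)
lemma cf_const: "cf [:[:c:]:] i j = (if i = 0 \<and> j = 0 then c else 0)"
  by (simp add: cf_def coeff_pCons split: nat.splits)
lemma Vp_const: "[:[:c:]:] \<in> Vp n"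
  by (rule VpI) (auto simp: cf_const split: if_splits)

lemma Vp_mult: assumes "p \<in> Vp n" "q \<in> Vp n" shows "p * q \<in> Vp n"
proof (rule VpI)
  fix i j assume nz: "cf (p*q) i j \<noteq> 0"
  show "(i+j) mod n = 0"
  proof (rule ccontr)
    assume c: "(i+j) mod n \<noteq> 0"
    have "\<forall>j'\<le>j. \<forall>i'\<le>i. cf p i' j' * cf q (i-i') (j-j') = 0"
    proof (intro allI impI)
      fix j' i' assume le: "j' \<le> j" "i' \<le> i"
      show "cf p i' j' * cf q (i-i') (j-j') = 0"
      proof (rule ccontr)
        assume "cf p i' j' * cf q (i-i') (j-j') \<noteq> 0"
        then have "cf p i' j' \<noteq> 0" "cf q (i-i') (j-j') \<noteq> 0" by auto
        with assms have "(i'+j') mod n = 0" "((i-i')+(j-j')) mod n = 0"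
          by (auto simp: Vp_def)
        moreover have "i + j = (i'+j') + ((i-i')+(j-j'))" using le by simp
        ultimately show False using c by (metis mod_add_eq add.right_neutral mod_0)
      qed
    qed
    then have "cf (p*q) i j = 0" unfolding cf_mult by (intro sum.neutral ballI) auto
    with nz show False by simp
  qed
qed

lemma Vp_pow: "p \<in> Vp n \<Longrightarrow> p ^ k \<in> Vp n"
  by (induction k) (simp_all add: Vp_1 Vp_mult)

definition Rs :: "nat \<Rightarrow> nat set \<Rightarrow> 'k::field poly poly set" where
  "Rs n Bad = {p \<in> Vp n. \<forall>j\<in>Bad. coeff p j = 0}"

definition goodBad :: "nat set \<Rightarrow> bool" where
  "goodBad Bad \<longleftrightarrow> 0 \<notin> Bad \<and> (\<forall>j\<in>Bad. \<forall>i\<le>j. i \<in> Bad \<or> j - i \<in> Bad)"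

lemma Rs_add: "p \<in> Rs n B \<Longrightarrow> q \<in> Rs n B \<Longrightarrow> p + q \<in> Rs n B"
  by (auto simp: Rs_def Vp_add)
lemma Rs_uminus: "p \<in> Rs n B \<Longrightarrow> - p \<in> Rs n B"
  by (auto simp: Rs_def Vp_uminus)
lemma Rs_diff: "p \<in> Rs n B \<Longrightarrow> q \<in> Rs n B \<Longrightarrow> p - q \<in> Rs n B"
  by (auto simp: Rs_def Vp_diff)
lemma Rs_0: "0 \<in> Rs n B" by (auto simp: Rs_def Vp_0)
lemma Rs_1: "goodBad B \<Longrightarrow> 1 \<in> Rs n B"
  unfolding Rs_def goodBad_def using Vp_1 by (auto simp: coeff_1) (metis neq0_conv)
lemma Rs_const: "goodBad B \<Longrightarrow> [:[:c:]:] \<in> Rs n B"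
  by (auto simp: Rs_def Vp_const goodBad_def coeff_pCons split: nat.splits)
lemma Rs_mult: assumes "goodBad B" "p \<in> Rs n B" "q \<in> Rs n B" shows "p * q \<in> Rs n B"
proof -
  have "\<forall>j\<in>B. coeff (p*q) j = 0"
  proof
    fix j assume j: "j \<in> B"
    have "\<forall>i\<le>j. coeff p i * coeff q (j-i) = 0"
      using assms j by (auto simp: Rs_def goodBad_def)
    then show "coeff (p*q) j = 0" unfolding coeff_mult by (intro sum.neutral) auto
  qed
  then show ?thesis using assms by (auto simp: Rs_def Vp_mult)
qed
lemma Rs_pow: "goodBad B \<Longrightarrow> p \<in> Rs n B \<Longrightarrow> p ^ k \<in> Rs n B"
  by (induction k) (simp_all add: Rs_1 Rs_mult)
lemma Rs_Vp: "Rs n B \<subseteq> Vp n" by (auto simp: Rs_def)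

lemma Rs_mono: "(i+j) mod n = 0 \<Longrightarrow> j \<notin> B \<Longrightarrow> mono i j \<in> Rs n B"
  using Vp_mono[of i j n] by (auto simp: Rs_def mono_def coeff_monom)

definition ring_closed :: "'F::field set \<Rightarrow> bool" where
  "ring_closed S \<longleftrightarrow> 1 \<in> S \<and> (\<forall>a\<in>S. \<forall>b\<in>S. a + b \<in> S \<and> a * b \<in> S) \<and> (\<forall>a\<in>S. - a \<in> S)"

lemma ring_gen_min: assumes "ring_closed S" "X \<subseteq> S" shows "ring_gen X \<subseteq> S"
proof
  fix x assume "x \<in> ring_gen X" then show "x \<in> S"
    by (induction rule: ring_gen.induct) (use assms in \<open>auto simp: ring_closed_def\<close>)
qed

lemma ring_gen_closed: "ring_closed (ring_gen X)"
  by (auto simp: ring_closed_def intro: ring_gen.intros)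

lemma ring_closed_0: "ring_closed S \<Longrightarrow> 0 \<in> S"
  unfolding ring_closed_def by (metis add.right_inverse)
lemma ring_closed_diff: "ring_closed S \<Longrightarrow> a \<in> S \<Longrightarrow> b \<in> S \<Longrightarrow> a - b \<in> S"
  unfolding ring_closed_def by (metis diff_conv_add_uminus)
lemma ring_closed_add: "ring_closed S \<Longrightarrow> a \<in> S \<Longrightarrow> b \<in> S \<Longrightarrow> a + b \<in> S"
  unfolding ring_closed_def by blast
lemma ring_closed_mult: "ring_closed S \<Longrightarrow> a \<in> S \<Longrightarrow> b \<in> S \<Longrightarrow> a * b \<in> S"
  unfolding ring_closed_def by blast
lemma ring_closed_uminus: "ring_closed S \<Longrightarrow> a \<in> S \<Longrightarrow> - a \<in> S"
  unfolding ring_closed_def by blast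
lemma ring_closed_1: "ring_closed S \<Longrightarrow> 1 \<in> S"
  unfolding ring_closed_def by blast
lemma ring_closed_pow: "ring_closed S \<Longrightarrow> a \<in> S \<Longrightarrow> a ^ k \<in> S"
  by (induction k) (auto intro: ring_closed_1 ring_closed_mult)
lemma ring_closed_sum: "ring_closed S \<Longrightarrow> (\<And>a. a \<in> A \<Longrightarrow> f a \<in> S) \<Longrightarrow> sum f A \<in> S"
  by (induction A rule: infinite_finite_induct) (auto intro: ring_closed_0 ring_closed_add)

lemma ring_closed_emb_Rs: "goodBad B \<Longrightarrow> ring_closed (emb ` Rs n B)"
  unfolding ring_closed_def
  by (auto simp: emb_1[symmetric] emb_add[symmetric] emb_mult[symmetric] emb_uminus[symmetric]
      intro!: imageI Rs_1 Rs_add Rs_mult Rs_uminus)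

lemma ring_closed_emb_Vp: "ring_closed (emb ` Vp n)"
  unfolding ring_closed_def
  by (auto simp: emb_1[symmetric] emb_add[symmetric] emb_mult[symmetric] emb_uminus[symmetric]
      intro!: imageI Vp_1 Vp_add Vp_mult Vp_uminus)

lemma monom_sum: "monom (sum f A) n = (\<Sum>a\<in>A. monom (f a) n)"
  by (induction A rule: infinite_finite_induct) (simp_all add: add_monom[symmetric])

lemma poly_poly_sum: "p = (\<Sum>j\<le>degree p. \<Sum>i\<le>degree (coeff p j). monom (monom (cf p i j) i) j)"
proof -
  have "p = (\<Sum>j\<le>degree p. monom (\<Sum>i\<le>degree (coeff p j). monom (cf p i j) i) j)"
    by (simp add: cf_def poly_as_sum_of_monoms)
  also have "\<dots> = (\<Sum>j\<le>degree p. \<Sum>i\<le>degree (coeff p j). monom (monom (cf p i j) i) j)"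
    by (simp add: monom_sum)
  finally show ?thesis .
qed

lemma monom_monom_eq: "monom (monom c i) j = [:[:c:]:] * mono i j"
  by (simp add: mono_def smult_monom)

lemma kalg_char:
  fixes G :: "'k::field poly poly fract set"
  assumes gb: "goodBad B" and G: "G \<subseteq> emb ` Rs n B"
    and mon: "\<And>i j. (i+j) mod n = 0 \<Longrightarrow> j \<notin> B \<Longrightarrow> emb (mono i j) \<in> kalg G"
  shows "kalg G = emb ` Rs n B"
proof
  have "constants \<subseteq> emb ` Rs n B"
    using gb by (auto simp: constants_def intro!: imageI Rs_const)
  then show "kalg G \<subseteq> emb ` Rs n B"
    unfolding kalg_def using G by (intro ring_gen_min ring_closed_emb_Rs gb) auto
next
  have rc: "ring_closed (kalg G)" by (simp add: kalg_def ring_gen_closed)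
  show "emb ` Rs n B \<subseteq> kalg G"
  proof
    fix x :: "'k poly poly fract" assume "x \<in> emb ` Rs n B"
    then obtain p where p: "p \<in> Rs n B" and x: "x = emb p" by auto
    have trm: "emb (monom (monom (cf p i j) i) j) \<in> kalg G" for i j
    proof (cases "cf p i j = 0")
      case True then show ?thesis using ring_closed_0[OF rc] by (simp add: emb_0)
    next
      case False
      then have "(i+j) mod n = 0" using p by (auto simp: Rs_def Vp_def)
      moreover have "j \<notin> B" using p False by (auto simp: Rs_def cf_def)
      ultimately have "emb (mono i j) \<in> kalg G" by (rule mon)
      moreover have "emb [:[:cf p i j:]:] \<in> kalg G"
        unfolding kalg_def constants_def by (rule ring_gen.base) auto
      ultimately show ?thesis
        unfolding monom_monom_eq emb_mult by (intro ring_closed_mult[OF rc])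
    qed
    have "x = (\<Sum>j\<le>degree p. \<Sum>i\<le>degree (coeff p j). emb (monom (monom (cf p i j) i) j))"
      using x poly_poly_sum[of p] by (metis (no_types, lifting) emb_sum sum.cong)
    then show "x \<in> kalg G"
      by (simp add: ring_closed_sum[OF rc] trm)
  qed
qed


definition rhom :: "('a::comm_ring_1 \<Rightarrow> 'b::comm_ring_1) \<Rightarrow> bool" where
  "rhom f \<longleftrightarrow> f 0 = 0 \<and> f 1 = 1 \<and> (\<forall>a b. f (a+b) = f a + f b) \<and> (\<forall>a b. f (a*b) = f a * f b)"

lemma rhom_add: "rhom f \<Longrightarrow> f (a+b) = f a + f b" by (simp add: rhom_def)
lemma rhom_mult: "rhom f \<Longrightarrow> f (a*b) = f a * f b" by (simp add: rhom_def)
lemma rhom_0: "rhom f \<Longrightarrow> f 0 = 0" by (simp add: rhom_def)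
lemma rhom_1: "rhom f \<Longrightarrow> f 1 = 1" by (simp add: rhom_def)
lemma rhom_uminus: "rhom f \<Longrightarrow> f (-a) = - f a"
  by (metis add.right_inverse add_eq_0_iff rhom_add rhom_0)
lemma rhom_sum: "rhom f \<Longrightarrow> f (sum g A) = (\<Sum>a\<in>A. f (g a))"
  by (induction A rule: infinite_finite_induct) (simp_all add: rhom_0 rhom_add)
lemma rhom_pow: "rhom f \<Longrightarrow> f (a ^ n) = f a ^ n"
  by (induction n) (simp_all add: rhom_1 rhom_mult)

lemma rhom_map_poly: assumes f: "rhom f" shows "rhom (map_poly f)"
proof -
  have z: "f 0 = 0" using f by (rule rhom_0)
  have "map_poly f (p + q) = map_poly f p + map_poly f q" for p q
    by (rule poly_eqI) (simp add: coeff_map_poly z rhom_add[OF f])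
  moreover have "map_poly f (p * q) = map_poly f p * map_poly f q" for p q
    by (rule poly_eqI) (simp add: coeff_map_poly z coeff_mult rhom_sum[OF f] rhom_mult[OF f])
  ultimately show ?thesis using f by (simp add: rhom_def rhom_1)
qed

lemma rhom_abs_fw: "rhom (abs_fw :: 'a::field \<Rightarrow> 'a fw)"
  unfolding rhom_def
  by (simp add: rep_fw_inject[symmetric] abs_fw_inverse zero_fw.rep_eq one_fw.rep_eq
      plus_fw.rep_eq times_fw.rep_eq)

lemma rhom_rep_fw: "rhom (rep_fw :: 'a::field fw \<Rightarrow> 'a)"
  unfolding rhom_def
  by (simp add: zero_fw.rep_eq one_fw.rep_eq plus_fw.rep_eq times_fw.rep_eq)

lemma rr_core:
  fixes p q :: "'a::factorial_ring_gcd"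
  assumes q: "q \<noteq> 0" and eq: "p ^ n + (\<Sum>i<n. c i * p ^ i * q ^ (n - i)) = 0"
  shows "q dvd p"
proof -
  define g where "g = gcd p q"
  have g0: "g \<noteq> 0" using q by (simp add: g_def)
  obtain p' q' where pq: "p = p' * g" "q = q' * g" and cop: "coprime p' q'"
    using gcd_coprime_exists[OF g0[unfolded g_def]] unfolding g_def by blast
  have "g ^ n * (p' ^ n + (\<Sum>i<n. c i * p' ^ i * q' ^ (n - i))) = 0"
  proof -
    have "g ^ n * (\<Sum>i<n. c i * p' ^ i * q' ^ (n - i)) = (\<Sum>i<n. c i * p ^ i * q ^ (n - i))"
      unfolding sum_distrib_left
    proof (rule sum.cong)
      fix i assume "i \<in> {..<n}"
      then have "n = i + (n - i)" by simp
      then have gn: "g ^ n = g ^ i * g ^ (n - i)" by (metis power_add)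
      have "c i * p ^ i * q ^ (n - i) = c i * (p' * g) ^ i * (q' * g) ^ (n - i)" using pq by simp
      also have "\<dots> = g ^ n * (c i * p' ^ i * q' ^ (n - i))"
        unfolding gn by (simp add: power_mult_distrib ac_simps)
      finally show "g ^ n * (c i * p' ^ i * q' ^ (n - i)) = c i * p ^ i * q ^ (n - i)" by (rule sym)
    qed simp
    moreover have "g ^ n * p' ^ n = p ^ n" using pq by (simp add: power_mult_distrib algebra_simps)
    ultimately show ?thesis using eq by (simp add: distrib_left)
  qed
  then have eq': "p' ^ n + (\<Sum>i<n. c i * p' ^ i * q' ^ (n - i)) = 0" using g0 by simp
  have "q' dvd (\<Sum>i<n. c i * p' ^ i * q' ^ (n - i))"
  proof (rule dvd_sum)
    fix i assume "i \<in> {..<n}"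
    then have "q' ^ (n - i) = q' * q' ^ (n - i - 1)"
      by (metis Suc_diff_Suc lessThan_iff minus_nat.diff_0 power_Suc diff_Suc_1 zero_less_diff)
    then show "q' dvd c i * p' ^ i * q' ^ (n - i)" by simp
  qed
  then have "q' dvd p' ^ n"
    using eq' by (metis add.commute add_eq_0_iff dvd_minus_iff)
  moreover have "coprime (p' ^ n) q'" using cop by simp
  ultimately have "is_unit q'" using coprime_absorb_right by blast
  then have "q' * g dvd p' * g" by (simp add: mult_dvd_mono unit_imp_dvd)
  then show ?thesis using pq by simp
qed

definition PhiF :: "'k::field poly poly \<Rightarrow> 'k fw poly poly" where
  "PhiF = map_poly (map_poly abs_fw)"
definition PsiF :: "'k::field fw poly poly \<Rightarrow> 'k poly poly" where
  "PsiF = map_poly (map_poly rep_fw)"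

lemma rhom_PhiF: "rhom PhiF"
  unfolding PhiF_def by (intro rhom_map_poly rhom_abs_fw)
lemma rhom_PsiF: "rhom PsiF"
  unfolding PsiF_def by (intro rhom_map_poly rhom_rep_fw)
lemma PsiF_PhiF: "PsiF (PhiF p) = p"
proof -
  have "PsiF (PhiF p) = map_poly (map_poly rep_fw \<circ> map_poly abs_fw) p"
    unfolding PsiF_def PhiF_def by (simp add: map_poly_map_poly zero_fw.rep_eq)
  also have "map_poly rep_fw \<circ> map_poly abs_fw = (\<lambda>x. x)"
  proof
    fix x
    have "map_poly rep_fw (map_poly abs_fw x) = map_poly (rep_fw \<circ> abs_fw) x"
      by (rule map_poly_map_poly) (simp_all add: rhom_0[OF rhom_abs_fw] rhom_0[OF rhom_rep_fw])
    also have "rep_fw \<circ> abs_fw = (\<lambda>x. x)" by (rule ext) (simp add: abs_fw_inverse)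
    finally show "(map_poly rep_fw \<circ> map_poly abs_fw) x = x" by simp
  qed
  finally show ?thesis by simp
qed

lemma rr_poly:
  fixes p q :: "'k::field poly poly"
  assumes q: "q \<noteq> 0" and eq: "p ^ n + (\<Sum>i<n. c i * p ^ i * q ^ (n - i)) = 0"
  shows "q dvd p"
proof -
  have "PhiF q \<noteq> 0" using q PsiF_PhiF rhom_0[OF rhom_PsiF] by metis
  moreover have "PhiF p ^ n + (\<Sum>i<n. PhiF (c i) * PhiF p ^ i * PhiF q ^ (n - i)) = 0"
    using arg_cong[OF eq, of PhiF]
    by (simp add: rhom_add[OF rhom_PhiF] rhom_sum[OF rhom_PhiF] rhom_mult[OF rhom_PhiF]
        rhom_pow[OF rhom_PhiF] rhom_0[OF rhom_PhiF])
  ultimately have "PhiF q dvd PhiF p" by (rule rr_core)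
  then obtain h where "PhiF p = PhiF q * h" by blast
  then have "PsiF (PhiF p) = PsiF (PhiF q) * PsiF h" by (simp add: rhom_mult[OF rhom_PsiF])
  then show ?thesis by (simp add: PsiF_PhiF)
qed


lemma Fract_power: "Fract a b ^ i = Fract (a ^ i) (b ^ i)"
  by (induction i) (simp_all add: One_fract_def)

lemma integral_emb:
  fixes \<alpha> :: "'k::field poly poly fract"
  assumes lc: "lead_coeff P = 1" and cP: "\<forall>i. coeff P i \<in> range emb" and r: "poly P \<alpha> = 0"
  shows "\<alpha> \<in> range emb"
proof -
  obtain a b where ab: "\<alpha> = Fract a b" "b \<noteq> 0" by (cases \<alpha>) auto
  from cP have "\<forall>i. \<exists>x. coeff P i = emb x" by blast
  then obtain c where c: "\<And>i. coeff P i = emb (c i)" by metis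
  define n where "n = degree P"
  have cn: "c n = 1" using lc c[of n] by (simp add: n_def emb_1[symmetric] emb_inj)
  have key: "emb (b^n) * \<alpha>^i = emb (a^i * b^(n-i))" if "i \<le> n" for i
  proof -
    have bn: "b ^ n = b ^ i * b ^ (n - i)" using that by (metis le_add_diff_inverse power_add)
    have "emb (b^n) * \<alpha>^i = Fract (b ^ i * (b ^ (n - i) * a ^ i)) (b ^ i * 1)"
      by (simp add: ab emb_def Fract_power bn ac_simps)
    also have "\<dots> = Fract (b ^ (n - i) * a ^ i) 1"
      by (rule mult_fract_cancel) (simp add: ab)
    finally show ?thesis by (simp add: emb_def ac_simps)
  qed
  have "0 = emb (b^n) * poly P \<alpha>" using r by simp
  also have "\<dots> = (\<Sum>i\<le>n. emb (c i) * (emb (b^n) * \<alpha>^i))"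
    by (simp add: poly_altdef n_def sum_distrib_left c ac_simps)
  also have "\<dots> = (\<Sum>i\<le>n. emb (c i * (a^i * b^(n-i))))"
    by (rule sum.cong) (simp_all add: key emb_mult)
  also have "\<dots> = emb (\<Sum>i\<le>n. c i * (a^i * b^(n-i)))" by (simp add: emb_sum)
  finally have "(\<Sum>i\<le>n. c i * (a^i * b^(n-i))) = 0" by (simp add: emb_eq0)
  moreover have "(\<Sum>i\<le>n. c i * (a^i * b^(n-i))) = (\<Sum>i<n. c i * a ^ i * b ^ (n - i)) + a ^ n"
    unfolding lessThan_Suc_atMost[symmetric] sum.lessThan_Suc by (simp add: cn mult.assoc)
  ultimately have "a ^ n + (\<Sum>i<n. c i * a ^ i * b ^ (n - i)) = 0" by (simp add: add.commute)
  then have "b dvd a" using ab(2) by (rule rr_poly[rotated])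
  then obtain k where k: "a = b * k" by blast
  have "\<alpha> = Fract (b * k) (b * 1)" using ab k by simp
  also have "\<dots> = emb k" using ab(2) mult_fract_cancel[of b k 1] by (simp add: emb_def)
  finally show ?thesis by simp
qed

definition rst :: "(nat \<Rightarrow> nat \<Rightarrow> bool) \<Rightarrow> 'k::field poly poly \<Rightarrow> 'k poly poly" where
  "rst P p = (\<Sum>j\<le>degree p. \<Sum>i\<le>degree (coeff p j). monom (monom (if P i j then cf p i j else 0) i) j)"

lemma cf_sum: "cf (sum f A) i j = (\<Sum>a\<in>A. cf (f a) i j)"
  by (induction A rule: infinite_finite_induct) simp_all

lemma cf_monom_monom: "cf (monom (monom c a) b) i j = (if i = a \<and> j = b then c else 0)"
  by (simp add: cf_def coeff_monom)

lemma cf_rst: "cf (rst P p) i j = (if P i j then cf p i j else 0)"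
proof -
  have "cf (rst P p) i j = (\<Sum>b\<le>degree p. if j = b then (\<Sum>a\<le>degree (coeff p b).
           (if i = a then (if P a b then cf p a b else 0) else 0)) else 0)"
    unfolding rst_def cf_sum cf_monom_monom by (intro sum.cong refl) auto
  also have "\<dots> = (if j \<le> degree p \<and> i \<le> degree (coeff p j) then (if P i j then cf p i j else 0) else 0)"
    by (simp only: sum.delta' finite_atMost atMost_iff) auto
  also have "\<dots> = (if P i j then cf p i j else 0)"
    by (auto simp: cf_def coeff_eq_0 not_le)
  finally show ?thesis .
qed

lemma grading:
  assumes eq: "f * x = y" and x: "x \<in> Vp n" "x \<noteq> 0" and y: "y \<in> Vp n"
  shows "f \<in> Vp n"
proof -
  define f0 where "f0 = rst (\<lambda>i j. (i+j) mod n = 0) f"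
  define f1 where "f1 = f - f0"
  have cf1: "cf f1 i j = (if (i+j) mod n = 0 then 0 else cf f i j)" for i j
    by (simp add: f1_def f0_def cf_rst)
  have f0V: "f0 \<in> Vp n" by (rule VpI) (simp add: f0_def cf_rst split: if_splits)
  have "f1 * x = y - f0 * x" using eq by (simp add: f1_def algebra_simps)
  then have f1xV: "f1 * x \<in> Vp n" using y f0V x by (simp add: Vp_diff Vp_mult)
  have "f1 * x = 0"
  proof (rule cf_eqI)
    fix i j
    show "cf (f1 * x) i j = cf 0 i j"
    proof (cases "(i+j) mod n = 0")
      case False then show ?thesis using f1xV by (simp add: VpD)
    next
      case True
      have "\<forall>j'\<le>j. \<forall>i'\<le>i. cf f1 i' j' * cf x (i-i') (j-j') = 0"
      proof (intro allI impI)
        fix j' i' assume le: "j' \<le> j" "i' \<le> i"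
        show "cf f1 i' j' * cf x (i-i') (j-j') = 0"
        proof (cases "cf x (i-i') (j-j') = 0")
          case False
          then have "((i-i')+(j-j')) mod n = 0" using x VpD by blast
          moreover have "i + j = (i'+j') + ((i-i')+(j-j'))" using le by simp
          ultimately have "(i'+j') mod n = 0" using True
            by (metis add.right_neutral mod_add_right_eq)
          then show ?thesis by (simp add: cf1)
        qed simp
      qed
      then show ?thesis unfolding cf_mult by (simp add: sum.neutral)
    qed
  qed
  then have "f1 = 0" using x by simp
  then have "f = f0" by (simp add: f1_def)
  then show ?thesis using f0V by simp
qed

lemma nzd_ne0: "x \<in> nzd A \<Longrightarrow> 1 \<in> A \<Longrightarrow> x \<noteq> (0::'a::field)"
  by (auto simp: nzd_def)
lemma nzdI: "x \<in> A \<Longrightarrow> x \<noteq> (0::'a::field) \<Longrightarrow> x \<in> nzd A"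
  by (auto simp: nzd_def)

lemma int_closure_upper:
  fixes A :: "'k::field poly poly fract set"
  assumes A: "A \<subseteq> emb ` Vp n" and one: "1 \<in> A"
  shows "int_closure A \<subseteq> emb ` Vp n"
proof
  fix \<alpha> assume a: "\<alpha> \<in> int_closure A"
  then obtain x y where xy: "\<alpha> = y / x" "x \<in> nzd A" "y \<in> A"
    by (auto simp: int_closure_def total_quot_def)
  obtain P where P: "lead_coeff P = 1" "\<forall>i. coeff P i \<in> A" "poly P \<alpha> = 0"
    using a by (auto simp: int_closure_def)
  have "\<forall>i. coeff P i \<in> range emb" using P(2) A by blast
  then obtain f where f: "\<alpha> = emb f" using integral_emb[OF P(1) _ P(3)] by blast
  have x0: "x \<noteq> 0" using nzd_ne0[OF xy(2) one] .
  have "x \<in> A" using xy(2) by (simp add: nzd_def)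
  then obtain x' where x': "x = emb x'" "x' \<in> Vp n" using A by blast
  obtain y' where y': "y = emb y'" "y' \<in> Vp n" using A xy(3) by blast
  have "x' \<noteq> 0" using x0 x' emb_0 by metis
  have "emb (f * x') = emb y'" using f xy(1) x' y' x0 by (simp add: emb_mult field_simps)
  then have "f * x' = y'" by (simp add: emb_inj)
  then have "f \<in> Vp n" using grading x'(2) \<open>x' \<noteq> 0\<close> y'(2) by blast
  then show "\<alpha> \<in> emb ` Vp n" using f by simp
qed


lemma coeff_low_mult:
  assumes "\<forall>j<s. coeff p j = 0" "\<forall>j<t. coeff q j = 0" "j < s + t"
  shows "coeff (p*q) j = 0"
  unfolding coeff_mult
proof (rule sum.neutral, rule ballI)
  fix i assume "i \<in> {..j}"
  then have "i < s \<or> j - i < t" using assms(3) by auto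
  then show "coeff p i * coeff q (j - i) = 0" using assms(1,2) by auto
qed

lemma coeff_low_pow: "coeff v 0 = 0 \<Longrightarrow> j < k \<Longrightarrow> coeff (v^k) j = 0"
proof (induction k arbitrary: j)
  case 0 then show ?case by simp
next
  case (Suc k)
  have "coeff (v * v^k) j = 0"
    by (rule coeff_low_mult[of 1 _ k]) (use Suc in auto)
  then show ?case by simp
qed

lemma coeffs_in_ring_mult:
  assumes S: "ring_closed S" and p: "\<forall>i. coeff p i \<in> S" and q: "\<forall>i. coeff q i \<in> S"
  shows "coeff (p*q) i \<in> S"
  unfolding coeff_mult by (rule ring_closed_sum[OF S]) (use S p q in \<open>auto intro: ring_closed_mult\<close>)

lemma coeffs_in_ring_pow:
  assumes S: "ring_closed S" and p: "\<forall>i. coeff p i \<in> S"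
  shows "coeff (p^k) i \<in> S"
proof (induction k arbitrary: i)
  case 0 then show ?case using ring_closed_1[OF S] ring_closed_0[OF S] by (simp add: coeff_1)
next
  case (Suc k) then show ?case using coeffs_in_ring_mult[OF S p] by simp
qed

lemma mono_0K: "mono 0 K = monom 1 K"
  by (simp add: mono_def)

lemma intcl_lower:
  fixes n K :: nat and B :: "nat set"
  assumes gb: "goodBad B" and KB: "\<forall>j\<in>B. j < K" and Kn: "K mod n = 0" and K0: "0 < K"
  shows "emb ` Vp n \<subseteq> (int_closure (emb ` Rs n B) :: 'k::field poly poly fract set)"
proof
  fix \<alpha> :: "'k poly poly fract" assume "\<alpha> \<in> emb ` Vp n"
  then obtain f where f: "\<alpha> = emb f" "f \<in> Vp n" by blast
  let ?R = "emb ` Rs n B :: 'k poly poly fract set"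
  have rc: "ring_closed ?R" using gb by (rule ring_closed_emb_Rs)
  have finB: "finite B" using KB by (metis finite_nat_set_iff_bounded)
  define m :: "'k poly poly" where "m = mono 0 K"
  have mR: "m \<in> Rs n B" unfolding m_def using KB Kn by (intro Rs_mono) auto
  have m0: "m \<noteq> 0" by (simp add: m_def mono_def)
  have fm: "m * f \<in> Rs n B"
    using Vp_mult[OF _ f(2), of m] mR KB
    by (auto simp: Rs_def m_def mono_0K coeff_monom_mult)
  have tq: "\<alpha> \<in> total_quot ?R"
  proof -
    have "\<alpha> = emb (m * f) / emb m" using m0 by (simp add: f emb_mult emb_eq0)
    moreover have "emb m \<in> nzd ?R" using mR m0 by (intro nzdI) (auto simp: emb_eq0)
    ultimately show ?thesis unfolding total_quot_def using fm by blast
  qed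
  define v where "v = (\<Sum>j\<in>B. monom (coeff f j) j)"
  have cv: "coeff v j = (if j \<in> B then coeff f j else 0)" for j
    unfolding v_def coeff_sum coeff_monom using finB by (simp add: sum.delta)
  have cfv: "cf v i j = (if j \<in> B then cf f i j else 0)" for i j
    by (simp add: cf_def cv)
  have vV: "v \<in> Vp n" by (rule VpI) (metis VpD cfv f(2))
  define a where "a = f - v"
  have aR: "a \<in> Rs n B" unfolding Rs_def a_def using Vp_diff[OF f(2) vV] by (simp add: cv)
  have v0: "coeff v 0 = 0" using gb by (simp add: cv goodBad_def)
  have vK: "v ^ K \<in> Rs n B"
    unfolding Rs_def using Vp_pow[OF vV] KB coeff_low_pow[OF v0] by auto
  define Q where "Q = [:- emb (v ^ K):] + [:- emb a, 1:] ^ K"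
  have lc: "lead_coeff Q = 1"
  proof -
    have "degree [:- emb (v ^ K):] < degree ([:- emb a, 1:] ^ K)"
      using K0 by (simp add: degree_linear_power)
    then have "lead_coeff Q = lead_coeff ([:- emb a, 1:] ^ K)"
      unfolding Q_def by (rule lead_coeff_add_le)
    then show ?thesis by (simp add: lead_coeff_power)
  qed
  have cQ: "\<forall>i. coeff Q i \<in> ?R"
  proof
    fix i
    have c1: "coeff [:- emb (v ^ K):] i \<in> ?R"
      using ring_closed_0[OF rc] ring_closed_uminus[OF rc] vK
      by (auto simp: coeff_pCons split: nat.splits)
    have "\<forall>i. coeff [:- emb a, 1:] i \<in> ?R"
      using ring_closed_0[OF rc] ring_closed_1[OF rc] ring_closed_uminus[OF rc] aR
      by (auto simp: coeff_pCons split: nat.splits)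
    then have c2: "coeff ([:- emb a, 1:] ^ K) i \<in> ?R" by (rule coeffs_in_ring_pow[OF rc])
    show "coeff Q i \<in> ?R" unfolding Q_def coeff_add by (rule ring_closed_add[OF rc c1 c2])
  qed
  have "poly Q \<alpha> = 0"
  proof -
    have "emb f - emb a = emb v" by (simp add: a_def emb_diff)
    then show ?thesis by (simp add: Q_def f emb_pow)
  qed
  then show "\<alpha> \<in> int_closure ?R" unfolding int_closure_def using tq lc cQ by blast
qed

lemma int_closure_Rs:
  fixes n K :: nat and B :: "nat set"
  assumes gb: "goodBad B" and KB: "\<forall>j\<in>B. j < K" and Kn: "K mod n = 0" and K0: "0 < K"
  shows "(int_closure (emb ` Rs n B) :: 'k::field poly poly fract set) = emb ` Vp n"
proof
  show "int_closure (emb ` Rs n B) \<subseteq> (emb ` Vp n :: 'k::field poly poly fract set)"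
    by (rule int_closure_upper) (use Rs_Vp ring_closed_1[OF ring_closed_emb_Rs[OF gb]] in auto)
  show "emb ` Vp n \<subseteq> (int_closure (emb ` Rs n B) :: 'k::field poly poly fract set)"
    by (rule intcl_lower[OF assms])
qed


definition sg :: "'F \<Rightarrow> 'F \<Rightarrow> ('F \<times> 'F \<Rightarrow> int)" where
  "sg b c = single (b, c)"

lemma T_zero: "0 \<in> tensor_rel A B"
  using tensor_rel.zero[of A B] by (simp add: zero_fun_def)
lemma T_plus: "f \<in> tensor_rel A B \<Longrightarrow> g \<in> tensor_rel A B \<Longrightarrow> f + g \<in> tensor_rel A B"
  using tensor_rel.plus[of f A B g] by (simp add: plus_fun_def)
lemma T_uminus: "f \<in> tensor_rel A B \<Longrightarrow> - f \<in> tensor_rel A B"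
  using tensor_rel.uminus[of f A B] by (simp add: fun_Compl_def)
lemma T_diff: "f \<in> tensor_rel A B \<Longrightarrow> g \<in> tensor_rel A B \<Longrightarrow> f - g \<in> tensor_rel A B"
  using T_plus[of f A B "- g"] T_uminus[of g A B] by simp
lemma T_uminus_iff: "- f \<in> tensor_rel A B \<longleftrightarrow> f \<in> tensor_rel A B"
  using T_uminus[of f A B] T_uminus[of "-f" A B] by auto

lemma T_addL: "b \<in> B \<Longrightarrow> b' \<in> B \<Longrightarrow> c \<in> B \<Longrightarrow> sg (b+b') c - sg b c - sg b' c \<in> tensor_rel A B"
  using tensor_rel.addL[of b B b' c A] by (simp add: sg_def fun_diff_def)
lemma T_addR: "b \<in> B \<Longrightarrow> c \<in> B \<Longrightarrow> c' \<in> B \<Longrightarrow> sg b (c+c') - sg b c - sg b c' \<in> tensor_rel A B"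
  using tensor_rel.addR[of b B c c' A] by (simp add: sg_def fun_diff_def)
lemma T_bal: "a \<in> A \<Longrightarrow> b \<in> B \<Longrightarrow> c \<in> B \<Longrightarrow> sg (a*b) c - sg b (a*c) \<in> tensor_rel A B"
  using tensor_rel.bal[of a A b B c] by (simp add: sg_def fun_diff_def)

definition eqv :: "'F::field set \<Rightarrow> 'F set \<Rightarrow> ('F \<times> 'F \<Rightarrow> int) \<Rightarrow> ('F \<times> 'F \<Rightarrow> int) \<Rightarrow> bool" where
  "eqv A B u v \<longleftrightarrow> u - v \<in> tensor_rel A B"

lemma eqv_refl: "eqv A B u u" by (simp add: eqv_def T_zero)
lemma eqv_sym: "eqv A B u v \<Longrightarrow> eqv A B v u"
  unfolding eqv_def using T_uminus[of "u - v" A B] by simp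
lemma eqv_trans: "eqv A B u v \<Longrightarrow> eqv A B v w \<Longrightarrow> eqv A B u w"
proof -
  assume "eqv A B u v" "eqv A B v w"
  then have "(u - v) + (v - w) \<in> tensor_rel A B" unfolding eqv_def by (rule T_plus)
  moreover have "(u - v) + (v - w) = u - w" by (simp add: algebra_simps)
  ultimately show ?thesis by (simp add: eqv_def)
qed
lemma eqv_add: "eqv A B u v \<Longrightarrow> eqv A B u' v' \<Longrightarrow> eqv A B (u + u') (v + v')"
proof -
  assume "eqv A B u v" "eqv A B u' v'"
  then have "(u - v) + (u' - v') \<in> tensor_rel A B" unfolding eqv_def by (rule T_plus)
  moreover have "(u - v) + (u' - v') = (u + u') - (v + v')" by (simp add: algebra_simps)
  ultimately show ?thesis by (simp add: eqv_def)
qed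
lemma eqv_uminus: "eqv A B u v \<Longrightarrow> eqv A B (- u) (- v)"
proof -
  assume "eqv A B u v"
  then have "- (u - v) \<in> tensor_rel A B" unfolding eqv_def by (rule T_uminus)
  moreover have "- (u - v) = (- u) - (- v)" by (simp add: algebra_simps)
  ultimately show ?thesis by (simp add: eqv_def)
qed
lemma eqv_0I: "u \<in> tensor_rel A B \<Longrightarrow> v \<in> tensor_rel A B \<Longrightarrow> eqv A B u v"
  unfolding eqv_def by (rule T_diff)

lemma sg0L: "c \<in> B \<Longrightarrow> (0::'F::field) \<in> B \<Longrightarrow> sg 0 c \<in> tensor_rel A B"
  using T_addL[of 0 B 0 c A] T_uminus_iff[of "sg 0 c" A B] by simp
lemma sg0R: "b \<in> B \<Longrightarrow> (0::'F::field) \<in> B \<Longrightarrow> sg b 0 \<in> tensor_rel A B"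
  using T_addR[of b B 0 0 A] T_uminus_iff[of "sg b 0" A B] by simp

definition Lm :: "'F::field \<Rightarrow> ('F \<times> 'F \<Rightarrow> int) \<Rightarrow> ('F \<times> 'F \<Rightarrow> int)" where
  "Lm r f = (\<lambda>(p, q). f (p / r, q))"
definition Rm :: "'F::field \<Rightarrow> ('F \<times> 'F \<Rightarrow> int) \<Rightarrow> ('F \<times> 'F \<Rightarrow> int)" where
  "Rm r f = (\<lambda>(p, q). f (p, q / r))"

lemma Lm_apply: "Lm r f (p, q) = f (p / r, q)" by (simp add: Lm_def)
lemma Rm_apply: "Rm r f (p, q) = f (p, q / r)" by (simp add: Rm_def)
lemma single_divL: fixes r :: "'F::field" assumes "r \<noteq> 0" shows "single (b, c) (p / r, q) = single (r * b, c) (p, q)"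
proof -
  have "p / r = b \<longleftrightarrow> p = b * r" using assms by (rule nonzero_divide_eq_eq)
  then have "p / r = b \<longleftrightarrow> p = r * b" by (simp add: mult.commute)
  then show ?thesis by (simp add: single_def)
qed
lemma single_divR: fixes r :: "'F::field" assumes "r \<noteq> 0" shows "single (b, c) (p, q / r) = single (b, c * r) (p, q)"
proof -
  have "q / r = c \<longleftrightarrow> q = c * r" using assms by (rule nonzero_divide_eq_eq)
  then show ?thesis by (simp add: single_def)
qed

lemma Lm_T:
  assumes f: "f \<in> tensor_rel A B" and r: "r \<noteq> 0" "\<forall>b\<in>B. r * b \<in> B"
  shows "Lm r f \<in> tensor_rel A B"
  using f
proof (induction rule: tensor_rel.induct)
  case (addL b b' c)
  have e: "Lm r (\<lambda>q. single (b + b', c) q - single (b, c) q - single (b', c) q) =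
        (\<lambda>q. single (r*b + r*b', c) q - single (r*b, c) q - single (r*b', c) q)"
  proof (rule ext)
    fix x show "Lm r (\<lambda>q. single (b + b', c) q - single (b, c) q - single (b', c) q) x =
        single (r*b + r*b', c) x - single (r*b, c) x - single (r*b', c) x"
      by (cases x) (simp add: Lm_apply single_divL[OF r(1)] distrib_left)
  qed
  show ?case unfolding e by (rule tensor_rel.addL) (use addL r(2) in auto)
next
  case (addR b c c')
  have e: "Lm r (\<lambda>q. single (b, c + c') q - single (b, c) q - single (b, c') q) =
        (\<lambda>q. single (r*b, c + c') q - single (r*b, c) q - single (r*b, c') q)"
  proof (rule ext)
    fix x show "Lm r (\<lambda>q. single (b, c + c') q - single (b, c) q - single (b, c') q) x =
        single (r*b, c + c') x - single (r*b, c) x - single (r*b, c') x"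
      by (cases x) (simp add: Lm_apply single_divL[OF r(1)])
  qed
  show ?case unfolding e by (rule tensor_rel.addR) (use addR r(2) in auto)
next
  case (bal a b c)
  have e: "Lm r (\<lambda>q. single (a * b, c) q - single (b, a * c) q) =
        (\<lambda>q. single (a * (r*b), c) q - single (r*b, a * c) q)"
  proof (rule ext)
    fix x show "Lm r (\<lambda>q. single (a * b, c) q - single (b, a * c) q) x =
        single (a * (r*b), c) x - single (r*b, a * c) x"
      by (cases x) (simp add: Lm_apply single_divL[OF r(1)] mult.left_commute)
  qed
  show ?case unfolding e by (rule tensor_rel.bal) (use bal r(2) in auto)
next
  case zero then show ?case by (simp add: Lm_def tensor_rel.zero)
next
  case (plus f g)
  have "Lm r (\<lambda>q. f q + g q) = (\<lambda>q. Lm r f q + Lm r g q)" by (auto simp: Lm_def)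
  then show ?case using plus tensor_rel.plus by metis
next
  case (uminus f)
  have "Lm r (\<lambda>q. - f q) = (\<lambda>q. - Lm r f q)" by (auto simp: Lm_def)
  then show ?case using uminus tensor_rel.uminus by metis
qed

lemma Rm_T:
  assumes f: "f \<in> tensor_rel A B" and r: "r \<noteq> 0" "\<forall>b\<in>B. b * r \<in> B"
  shows "Rm r f \<in> tensor_rel A B"
  using f
proof (induction rule: tensor_rel.induct)
  case (addL b b' c)
  have e: "Rm r (\<lambda>q. single (b + b', c) q - single (b, c) q - single (b', c) q) =
        (\<lambda>q. single (b + b', c*r) q - single (b, c*r) q - single (b', c*r) q)"
  proof (rule ext)
    fix x show "Rm r (\<lambda>q. single (b + b', c) q - single (b, c) q - single (b', c) q) x =
        single (b + b', c*r) x - single (b, c*r) x - single (b', c*r) x"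
      by (cases x) (simp add: Rm_apply single_divR[OF r(1)])
  qed
  show ?case unfolding e by (rule tensor_rel.addL) (use addL r(2) in auto)
next
  case (addR b c c')
  have e: "Rm r (\<lambda>q. single (b, c + c') q - single (b, c) q - single (b, c') q) =
        (\<lambda>q. single (b, c*r + c'*r) q - single (b, c*r) q - single (b, c'*r) q)"
  proof (rule ext)
    fix x show "Rm r (\<lambda>q. single (b, c + c') q - single (b, c) q - single (b, c') q) x =
        single (b, c*r + c'*r) x - single (b, c*r) x - single (b, c'*r) x"
      by (cases x) (simp add: Rm_apply single_divR[OF r(1)] distrib_right)
  qed
  show ?case unfolding e by (rule tensor_rel.addR) (use addR r(2) in auto)
next
  case (bal a b c)
  have e: "Rm r (\<lambda>q. single (a * b, c) q - single (b, a * c) q) =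
        (\<lambda>q. single (a * b, c*r) q - single (b, a * (c*r)) q)"
  proof (rule ext)
    fix x show "Rm r (\<lambda>q. single (a * b, c) q - single (b, a * c) q) x =
        single (a * b, c*r) x - single (b, a * (c*r)) x"
      by (cases x) (simp add: Rm_apply single_divR[OF r(1)] mult.assoc)
  qed
  show ?case unfolding e by (rule tensor_rel.bal) (use bal r(2) in auto)
next
  case zero then show ?case by (simp add: Rm_def tensor_rel.zero)
next
  case (plus f g)
  have "Rm r (\<lambda>q. f q + g q) = (\<lambda>q. Rm r f q + Rm r g q)" by (auto simp: Rm_def)
  then show ?case using plus tensor_rel.plus by metis
next
  case (uminus f)
  have "Rm r (\<lambda>q. - f q) = (\<lambda>q. - Rm r f q)" by (auto simp: Rm_def)
  then show ?case using uminus tensor_rel.uminus by metis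
qed

lemma Lm_sg: "r \<noteq> 0 \<Longrightarrow> Lm r (sg b c) = sg (r*b) c"
  by (intro ext) (clarsimp simp: Lm_apply sg_def single_divL)
lemma Rm_sg: "r \<noteq> 0 \<Longrightarrow> Rm r (sg b c) = sg b (c*r)"
  by (intro ext) (clarsimp simp: Rm_apply sg_def single_divR)
lemma Lm_diff: "Lm r (u - v) = Lm r u - Lm r v" by (auto simp: Lm_def fun_eq_iff)
lemma Rm_diff: "Rm r (u - v) = Rm r u - Rm r v" by (auto simp: Rm_def fun_eq_iff)

lemma eqv_Lmult:
  assumes B: "ring_closed B" and r: "r \<in> B"
    and bc: "b \<in> B" "c \<in> B" "b' \<in> B" "c' \<in> B"
    and e: "eqv A B (sg b c) (sg b' c')"
  shows "eqv A B (sg (r*b) c) (sg (r*b') c')"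
proof (cases "r = 0")
  case True
  then show ?thesis using sg0L[of c B A] sg0L[of c' B A] bc ring_closed_0[OF B]
    by (simp add: eqv_0I)
next
  case False
  have "Lm r (sg b c - sg b' c') \<in> tensor_rel A B"
    using e False B r by (intro Lm_T) (auto simp: eqv_def intro: ring_closed_mult)
  then show ?thesis using False by (simp add: eqv_def Lm_diff Lm_sg)
qed

lemma eqv_Rmult:
  assumes B: "ring_closed B" and r: "r \<in> B"
    and bc: "b \<in> B" "c \<in> B" "b' \<in> B" "c' \<in> B"
    and e: "eqv A B (sg b c) (sg b' c')"
  shows "eqv A B (sg b (c*r)) (sg b' (c'*r))"
proof (cases "r = 0")
  case True
  then show ?thesis using sg0R[of b B A] sg0R[of b' B A] bc ring_closed_0[OF B]
    by (simp add: eqv_0I)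
next
  case False
  have "Rm r (sg b c - sg b' c') \<in> tensor_rel A B"
    using e False B r by (intro Rm_T) (auto simp: eqv_def intro: ring_closed_mult)
  then show ?thesis using False by (simp add: eqv_def Rm_diff Rm_sg)
qed

lemma strict_closure_eq: "strict_closure A B = {\<alpha> \<in> B. eqv A B (sg \<alpha> 1) (sg 1 \<alpha>)}"
  by (simp add: strict_closure_def eqv_def sg_def fun_diff_def)

lemma Str_ring_closed:
  assumes B: "ring_closed (B :: 'F::field set)"
  shows "ring_closed (strict_closure A B)"
proof -
  let ?S = "strict_closure A B"
  have one: "1 \<in> B" "0 \<in> B" using B by (auto intro: ring_closed_1 ring_closed_0)
  have "1 \<in> ?S" using one by (simp add: strict_closure_eq eqv_refl)
  moreover have "\<alpha> + \<beta> \<in> ?S" if "\<alpha> \<in> ?S" "\<beta> \<in> ?S" for \<alpha> \<beta>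
  proof -
    have ab: "\<alpha> \<in> B" "\<beta> \<in> B" "eqv A B (sg \<alpha> 1) (sg 1 \<alpha>)" "eqv A B (sg \<beta> 1) (sg 1 \<beta>)"
      using that by (auto simp: strict_closure_eq)
    have e1: "eqv A B (sg (\<alpha>+\<beta>) 1) (sg \<alpha> 1 + sg \<beta> 1)"
      using T_addL[of \<alpha> B \<beta> 1 A] ab one by (simp add: eqv_def diff_diff_eq)
    have e2: "eqv A B (sg \<alpha> 1 + sg \<beta> 1) (sg 1 \<alpha> + sg 1 \<beta>)" using ab by (intro eqv_add)
    have "eqv A B (sg 1 (\<alpha>+\<beta>)) (sg 1 \<alpha> + sg 1 \<beta>)"
      using T_addR[of 1 B \<alpha> \<beta> A] ab one by (simp add: eqv_def diff_diff_eq)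
    then have e3: "eqv A B (sg 1 \<alpha> + sg 1 \<beta>) (sg 1 (\<alpha>+\<beta>))" by (rule eqv_sym)
    have "eqv A B (sg (\<alpha>+\<beta>) 1) (sg 1 (\<alpha>+\<beta>))" using eqv_trans[OF eqv_trans[OF e1 e2] e3] .
    then show ?thesis using ring_closed_add[OF B ab(1) ab(2)] by (simp add: strict_closure_eq)
  qed
  moreover have "- \<alpha> \<in> ?S" if "\<alpha> \<in> ?S" for \<alpha>
  proof -
    have ab: "\<alpha> \<in> B" "eqv A B (sg \<alpha> 1) (sg 1 \<alpha>)" using that by (auto simp: strict_closure_eq)
    have mB: "- \<alpha> \<in> B" using ring_closed_uminus[OF B ab(1)] .
    have X1: "sg 0 1 - sg \<alpha> 1 - sg (-\<alpha>) 1 \<in> tensor_rel A B"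
      using T_addL[of \<alpha> B "-\<alpha>" 1 A] ab mB one by simp
    have "sg 0 1 - (sg 0 1 - sg \<alpha> 1 - sg (-\<alpha>) 1) \<in> tensor_rel A B"
      using T_diff[OF sg0L[of 1 B A] X1] one by simp
    moreover have "sg 0 1 - (sg 0 1 - sg \<alpha> 1 - sg (-\<alpha>) 1) = sg (-\<alpha>) 1 - (- sg \<alpha> 1)"
      by (simp add: algebra_simps)
    ultimately have e1: "eqv A B (sg (-\<alpha>) 1) (- sg \<alpha> 1)" by (simp add: eqv_def)
    have X2: "sg 1 0 - sg 1 \<alpha> - sg 1 (-\<alpha>) \<in> tensor_rel A B"
      using T_addR[of 1 B \<alpha> "-\<alpha>" A] ab mB one by simp
    have "sg 1 0 - (sg 1 0 - sg 1 \<alpha> - sg 1 (-\<alpha>)) \<in> tensor_rel A B"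
      using T_diff[OF sg0R[of 1 B A] X2] one by simp
    moreover have "sg 1 0 - (sg 1 0 - sg 1 \<alpha> - sg 1 (-\<alpha>)) = sg 1 (-\<alpha>) - (- sg 1 \<alpha>)"
      by (simp add: algebra_simps)
    ultimately have e2: "eqv A B (sg 1 (-\<alpha>)) (- sg 1 \<alpha>)" by (simp add: eqv_def)
    have "eqv A B (sg (-\<alpha>) 1) (sg 1 (-\<alpha>))"
      using eqv_trans[OF eqv_trans[OF e1 eqv_uminus[OF ab(2)]] eqv_sym[OF e2]] .
    then show ?thesis using mB by (simp add: strict_closure_eq)
  qed
  moreover have "\<alpha> * \<beta> \<in> ?S" if "\<alpha> \<in> ?S" "\<beta> \<in> ?S" for \<alpha> \<beta>
  proof -
    have ab: "\<alpha> \<in> B" "\<beta> \<in> B" "eqv A B (sg \<alpha> 1) (sg 1 \<alpha>)" "eqv A B (sg \<beta> 1) (sg 1 \<beta>)"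
      using that by (auto simp: strict_closure_eq)
    have e1: "eqv A B (sg (\<alpha> * \<beta>) 1) (sg \<alpha> \<beta>)"
      using eqv_Lmult[OF B ab(1) ab(2) one(1) one(1) ab(2) ab(4)] by simp
    have e2: "eqv A B (sg \<alpha> \<beta>) (sg 1 (\<alpha> * \<beta>))"
      using eqv_Rmult[OF B ab(2) ab(1) one(1) one(1) ab(1) ab(3)] by simp
    have "eqv A B (sg (\<alpha> * \<beta>) 1) (sg 1 (\<alpha> * \<beta>))" using eqv_trans[OF e1 e2] by simp
    then show ?thesis using ring_closed_mult[OF B ab(1) ab(2)] by (simp add: strict_closure_eq)
  qed
  ultimately show ?thesis by (simp add: ring_closed_def)
qed

lemma A_sub_Str:
  assumes "A \<subseteq> B" "ring_closed (B :: 'F::field set)"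
  shows "A \<subseteq> strict_closure A B"
proof
  fix a assume a: "a \<in> A"
  have "1 \<in> B" using assms(2) by (rule ring_closed_1)
  then have "eqv A B (sg (a*1) 1) (sg 1 (a*1))" using T_bal[of a A 1 B 1] a
    by (simp add: eqv_def)
  then show "a \<in> strict_closure A B" using a assms(1) by (auto simp: strict_closure_eq)
qed

lemma lipman:
  assumes B: "ring_closed (B :: 'F::field set)"
    and S: "x \<in> strict_closure A B" "y \<in> strict_closure A B" "z \<in> strict_closure A B"
    and x0: "x \<noteq> 0" and yx: "y / x \<in> B" and zx: "z / x \<in> B"
  shows "y * z / x \<in> strict_closure A B"
proof -
  define \<alpha> where "\<alpha> = y / x"
  define \<beta> where "\<beta> = z / x"
  have xyz: "x \<in> B" "y \<in> B" "z \<in> B" "eqv A B (sg x 1) (sg 1 x)" "eqv A B (sg y 1) (sg 1 y)"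
    "eqv A B (sg z 1) (sg 1 z)" using S by (auto simp: strict_closure_eq)
  have one: "1 \<in> B" using B by (rule ring_closed_1)
  have ab: "\<alpha> \<in> B" "\<beta> \<in> B" using yx zx by (simp_all add: \<alpha>_def \<beta>_def)
  have g1: "y * z / x = \<alpha> * z" "y * z / x = y * \<beta>" "z = x * \<beta>" "y = \<alpha> * x"
    using x0 by (simp_all add: \<alpha>_def \<beta>_def field_simps)
  have e1: "eqv A B (sg (\<alpha> * z) 1) (sg \<alpha> z)"
    using eqv_Lmult[OF B ab(1) xyz(3) one one xyz(3) xyz(6)] by simp
  have "eqv A B (sg x (1 * \<beta>)) (sg 1 (x * \<beta>))"
    using eqv_Rmult[OF B ab(2) xyz(1) one one xyz(1) xyz(4)] by simp
  then have "eqv A B (sg x \<beta>) (sg 1 (x * \<beta>))" by simp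
  then have "eqv A B (sg (\<alpha> * x) \<beta>) (sg (\<alpha> * 1) (x * \<beta>))"
    by (rule eqv_Lmult[OF B ab(1) xyz(1) ab(2) one ring_closed_mult[OF B xyz(1) ab(2)]])
  then have e2: "eqv A B (sg \<alpha> z) (sg y \<beta>)"
    using g1 by (simp add: eqv_sym)
  have "eqv A B (sg y (1 * \<beta>)) (sg 1 (y * \<beta>))"
    using eqv_Rmult[OF B ab(2) xyz(2) one one xyz(2) xyz(5)] by simp
  then have e3: "eqv A B (sg y \<beta>) (sg 1 (y * \<beta>))" by simp
  have "eqv A B (sg (\<alpha> * z) 1) (sg 1 (y * \<beta>))"
    using e1 e2 e3 eqv_trans by blast
  moreover have "\<alpha> * z \<in> B" using B ab xyz by (intro ring_closed_mult)
  ultimately show ?thesis using g1 by (simp add: strict_closure_eq mult.assoc)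
qed

lemma arf_step_Str:
  assumes B: "ring_closed (B :: 'F::field set)" and AS: "A \<subseteq> strict_closure R B"
    and one: "1 \<in> A" and IC: "int_closure A \<subseteq> B"
  shows "arf_step A \<subseteq> strict_closure R B"
  unfolding arf_step_def
proof (rule ring_gen_min[OF Str_ring_closed[OF B]], safe)
  fix x assume "x \<in> A" then show "x \<in> strict_closure R B" using AS by blast
next
  fix x y z assume h: "x \<in> nzd A" "y \<in> A" "z \<in> A" "y / x \<in> int_closure A" "z / x \<in> int_closure A"
  have "x \<in> A" using h(1) by (simp add: nzd_def)
  then show "y * z / x \<in> strict_closure R B"
    using lipman[OF B, of x R y z] AS h IC nzd_ne0[OF h(1) one] by blast
qed

lemma arf_closure_Str:
  assumes B: "ring_closed (B :: 'F::field set)" and RS: "R \<subseteq> strict_closure R B"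
    and one: "1 \<in> R"
    and IC: "\<And>A. R \<subseteq> A \<Longrightarrow> A \<subseteq> strict_closure R B \<Longrightarrow> int_closure A \<subseteq> B"
  shows "arf_closure R \<subseteq> strict_closure R B"
proof -
  have "R \<subseteq> (arf_step ^^ k) R \<and> (arf_step ^^ k) R \<subseteq> strict_closure R B" for k
  proof (induction k)
    case 0 then show ?case using RS by simp
  next
    case (Suc k)
    let ?A = "(arf_step ^^ k) R"
    have "?A \<subseteq> arf_step ?A" unfolding arf_step_def by (auto intro: ring_gen.base)
    moreover have "arf_step ?A \<subseteq> strict_closure R B"
      using Suc one by (intro arf_step_Str[OF B] IC) auto
    ultimately show ?case using Suc by auto
  qed
  then show ?thesis unfolding arf_closure_def by blast
qed


lemma sum_single: "finite F \<Longrightarrow> (\<Sum>q\<in>F. of_int (single p q) * \<Phi> q) = (if p \<in> F then \<Phi> p else (0::'G::comm_ring_1))"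
proof -
  assume F: "finite F"
  have "\<And>q. of_int (single p q) * \<Phi> q = (if q = p then \<Phi> p else 0)" by (simp add: single_def)
  then show ?thesis using F by (simp add: sum.delta)
qed

lemma functional_zero:
  fixes \<Phi> :: "'F::field \<times> 'F \<Rightarrow> 'G::comm_ring_1"
  assumes addL: "\<And>b b' c. b\<in>B \<Longrightarrow> b'\<in>B \<Longrightarrow> c\<in>B \<Longrightarrow> \<Phi> (b+b',c) = \<Phi> (b,c) + \<Phi> (b',c)"
    and addR: "\<And>b c c'. b\<in>B \<Longrightarrow> c\<in>B \<Longrightarrow> c'\<in>B \<Longrightarrow> \<Phi> (b,c+c') = \<Phi> (b,c) + \<Phi> (b,c')"
    and bal: "\<And>a b c. a\<in>A \<Longrightarrow> b\<in>B \<Longrightarrow> c\<in>B \<Longrightarrow> \<Phi> (a*b,c) = \<Phi> (b,a*c)"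
    and f: "f \<in> tensor_rel A B"
  shows "\<exists>F. finite F \<and> (\<forall>F'. finite F' \<longrightarrow> F \<subseteq> F' \<longrightarrow> (\<Sum>q\<in>F'. of_int (f q) * \<Phi> q) = 0)"
  using f
proof (induction rule: tensor_rel.induct)
  case (addL b b' c)
  show ?case
  proof (intro exI[of _ "{(b+b',c),(b,c),(b',c)}"] conjI allI impI)
    fix F' :: "('F \<times> 'F) set" assume F': "finite F'" "{(b+b',c),(b,c),(b',c)} \<subseteq> F'"
    then show "(\<Sum>q\<in>F'. of_int (single (b + b', c) q - single (b, c) q - single (b', c) q) * \<Phi> q) = 0"
      using assms(1)[OF addL] by (simp add: of_int_diff left_diff_distrib sum_subtractf sum_single)
  qed simp
next
  case (addR b c c')
  show ?case
  proof (intro exI[of _ "{(b,c+c'),(b,c),(b,c')}"] conjI allI impI)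
    fix F' :: "('F \<times> 'F) set" assume F': "finite F'" "{(b,c+c'),(b,c),(b,c')} \<subseteq> F'"
    then show "(\<Sum>q\<in>F'. of_int (single (b, c + c') q - single (b, c) q - single (b, c') q) * \<Phi> q) = 0"
      using assms(2)[OF addR] by (simp add: of_int_diff left_diff_distrib sum_subtractf sum_single)
  qed simp
next
  case (bal a b c)
  show ?case
  proof (intro exI[of _ "{(a*b,c),(b,a*c)}"] conjI allI impI)
    fix F' :: "('F \<times> 'F) set" assume F': "finite F'" "{(a*b,c),(b,a*c)} \<subseteq> F'"
    then show "(\<Sum>q\<in>F'. of_int (single (a * b, c) q - single (b, a * c) q) * \<Phi> q) = 0"
      using assms(3)[OF bal] by (simp add: of_int_diff left_diff_distrib sum_subtractf sum_single)
  qed simp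
next
  case zero then show ?case by (intro exI[of _ "{}"]) simp
next
  case (plus f g)
  then obtain F G where FG: "finite F" "\<forall>F'. finite F' \<longrightarrow> F \<subseteq> F' \<longrightarrow> (\<Sum>q\<in>F'. of_int (f q) * \<Phi> q) = 0"
    "finite G" "\<forall>F'. finite F' \<longrightarrow> G \<subseteq> F' \<longrightarrow> (\<Sum>q\<in>F'. of_int (g q) * \<Phi> q) = 0" by blast
  show ?case
  proof (intro exI[of _ "F \<union> G"] conjI allI impI)
    fix F' :: "('F \<times> 'F) set" assume F': "finite F'" "F \<union> G \<subseteq> F'"
    then show "(\<Sum>q\<in>F'. of_int (f q + g q) * \<Phi> q) = 0"
      using FG by (simp add: distrib_right sum.distrib)
  qed (use FG in simp)
next
  case (uminus f)
  then obtain F where FG: "finite F" "\<forall>F'. finite F' \<longrightarrow> F \<subseteq> F' \<longrightarrow> (\<Sum>q\<in>F'. of_int (f q) * \<Phi> q) = 0"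
    by blast
  show ?case
  proof (intro exI[of _ "F"] conjI allI impI)
    fix F' :: "('F \<times> 'F) set" assume F': "finite F'" "F \<subseteq> F'"
    then show "(\<Sum>q\<in>F'. of_int (- f q) * \<Phi> q) = 0"
      using FG by (simp add: sum_negf)
  qed (use FG in simp)
qed

lemma functional_strict:
  fixes \<Phi> :: "'F::field \<times> 'F \<Rightarrow> 'G::comm_ring_1"
  assumes addL: "\<And>b b' c. b\<in>B \<Longrightarrow> b'\<in>B \<Longrightarrow> c\<in>B \<Longrightarrow> \<Phi> (b+b',c) = \<Phi> (b,c) + \<Phi> (b',c)"
    and addR: "\<And>b c c'. b\<in>B \<Longrightarrow> c\<in>B \<Longrightarrow> c'\<in>B \<Longrightarrow> \<Phi> (b,c+c') = \<Phi> (b,c) + \<Phi> (b,c')"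
    and bal: "\<And>a b c. a\<in>A \<Longrightarrow> b\<in>B \<Longrightarrow> c\<in>B \<Longrightarrow> \<Phi> (a*b,c) = \<Phi> (b,a*c)"
    and \<alpha>: "\<alpha> \<in> strict_closure A B"
  shows "\<Phi> (\<alpha>, 1) = \<Phi> (1, \<alpha>)"
proof (cases "\<alpha> = 1")
  case True then show ?thesis by simp
next
  case False
  have "(\<lambda>q. single (\<alpha>, 1) q - single (1, \<alpha>) q) \<in> tensor_rel A B"
    using \<alpha> by (simp add: strict_closure_def)
  from functional_zero[OF addL addR bal this] obtain F where F: "finite F"
    "\<forall>F'. finite F' \<longrightarrow> F \<subseteq> F' \<longrightarrow> (\<Sum>q\<in>F'. of_int (single (\<alpha>, 1) q - single (1, \<alpha>) q) * \<Phi> q) = 0"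
    by blast
  have "(\<Sum>q\<in>F \<union> {(\<alpha>,1),(1,\<alpha>)}. of_int (single (\<alpha>, 1) q - single (1, \<alpha>) q) * \<Phi> q) = 0"
    using F(2)[rule_format, of "F \<union> {(\<alpha>,1),(1,\<alpha>)}"] F(1) by blast
  then show ?thesis using F(1)
    by (simp add: of_int_diff left_diff_distrib sum_subtractf sum_single)
qed

definition pol :: "'k::field poly poly fract \<Rightarrow> 'k poly poly" where
  "pol \<alpha> = (THE p. \<alpha> = emb p)"

lemma pol_emb[simp]: "pol (emb p) = p"
  unfolding pol_def by (rule the_equality) (auto simp: emb_inj)

lemma pol_1: "pol 1 = 1" using pol_emb[of 1] by (simp add: emb_1)

lemma Rs_cf0: "p \<in> Rs n B \<Longrightarrow> (i+j) mod n \<noteq> 0 \<or> j \<in> B \<Longrightarrow> cf p i j = 0"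
  by (auto simp: Rs_def cf_def dest: VpD[unfolded cf_def])

lemma strict_coeff_zero:
  fixes \<alpha> :: "'k::field poly poly fract"
  assumes \<alpha>: "\<alpha> \<in> strict_closure (emb ` Rs n Bd) (emb ` Vp n)"
    and e: "0 < e" and eB: "\<forall>i. 0 < i \<and> i \<le> e \<longrightarrow> i \<in> Bd"
  shows "coeff (pol \<alpha>) e = 0"
proof -
  define \<Phi> :: "'k poly poly fract \<times> 'k poly poly fract \<Rightarrow> 'k poly" where
    "\<Phi> = (\<lambda>(u, v). coeff (pol u) e * coeff (pol v) 0)"
  let ?B = "emb ` Vp n :: 'k poly poly fract set"
  have ce: "coeff (pa * pb) e = coeff pa 0 * coeff pb e" if "pa \<in> Rs n Bd" for pa pb :: "'k poly poly"
  proof -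
    obtain e' where e': "e = Suc e'" using e by (cases e) auto
    have "coeff (pa * pb) e = coeff pa 0 * coeff pb e + (\<Sum>i\<le>e'. coeff pa (Suc i) * coeff pb (e - Suc i))"
      unfolding coeff_mult e' sum.atMost_Suc_shift by simp
    also have "(\<Sum>i\<le>e'. coeff pa (Suc i) * coeff pb (e - Suc i)) = 0"
      using that eB e' by (intro sum.neutral) (auto simp: Rs_def)
    finally show ?thesis by simp
  qed
  have "\<Phi> (\<alpha>, 1) = \<Phi> (1, \<alpha>)"
  proof (rule functional_strict[OF _ _ _ \<alpha>])
    fix b b' c :: "'k poly poly fract" assume "b \<in> ?B" "b' \<in> ?B" "c \<in> ?B"
    then show "\<Phi> (b + b', c) = \<Phi> (b, c) + \<Phi> (b', c)"
      by (auto simp: \<Phi>_def emb_add[symmetric] distrib_right)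
  next
    fix b c c' :: "'k poly poly fract" assume "b \<in> ?B" "c \<in> ?B" "c' \<in> ?B"
    then show "\<Phi> (b, c + c') = \<Phi> (b, c) + \<Phi> (b, c')"
      by (auto simp: \<Phi>_def emb_add[symmetric] distrib_left)
  next
    fix a b c :: "'k poly poly fract" assume "a \<in> emb ` Rs n Bd" "b \<in> ?B" "c \<in> ?B"
    then obtain pa pb pc where "a = emb pa" "b = emb pb" "c = emb pc" "pa \<in> Rs n Bd" by blast
    then show "\<Phi> (a * b, c) = \<Phi> (b, a * c)"
      by (simp add: \<Phi>_def emb_mult[symmetric] ce coeff_mult_0 ac_simps)
  qed
  then show ?thesis using e by (simp add: \<Phi>_def pol_1 coeff_1)
qed

lemma cfm_R1_35: assumes pa: "pa \<in> Rs 4 {1,2,5}"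
  shows "cf (pa*pb) 3 5 = cf pa 0 0 * cf pb 3 5 + cf pa 1 3 * cf pb 2 2 + cf pa 0 4 * cf pb 3 1"
  unfolding cf_mult using Rs_cf0[OF pa]
  by (simp add: atMost_nat_numeral)


lemma varX_pow: "varX ^ a = emb (mono a 0)"
  using varXY[of a 0] by simp
lemma varY_pow: "varY ^ b = emb (mono 0 b)"
  using varXY[of 0 b] by simp
lemma varX_varY_pow: "varX * varY ^ b = emb (mono 1 b)"
  using varXY[of 1 b] by simp

lemma emb_mono_ne0: "emb (mono i j) \<noteq> 0"
  by (simp add: emb_eq0 mono_def)

lemma div_emb: "emb p * emb q = emb r \<Longrightarrow> q \<noteq> 0 \<Longrightarrow> emb r / emb q = emb p"
  by (metis emb_eq0 nonzero_mult_div_cancel_right)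

lemma split_deg:
  assumes p: "p \<in> Vp n" and ej: "(e + j) mod n = 0" and low: "\<forall>i<e. cf p i j = 0"
    and gb: "goodBad Bd"
  shows "\<exists>g. g \<in> Rs n Bd \<and> monom (coeff p j) j = g * mono e j"
proof (intro exI conjI)
  define g where "g = [:poly_shift e (coeff p j):]"
  have cg: "cf g x y = (if y = 0 then cf p (x + e) j else 0)" for x y
    by (simp add: g_def cf_def coeff_poly_shift coeff_pCons split: nat.splits)
  show "g \<in> Rs n Bd"
  proof -
    have "g \<in> Vp n"
    proof (rule VpI)
      fix x y assume "cf g x y \<noteq> 0"
      then have "y = 0" "cf p (x + e) j \<noteq> 0" by (auto simp: cg split: if_splits)
      then have "(x + e + j) mod n = 0" using p VpD by blast
      then show "(x + y) mod n = 0" using ej \<open>y = 0\<close>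
        by (metis add.assoc add.right_neutral mod_add_right_eq)
    qed
    moreover have "\<forall>j\<in>Bd. coeff g j = 0" using gb
      by (auto simp: g_def goodBad_def coeff_pCons split: nat.splits)
    ultimately show ?thesis by (simp add: Rs_def)
  qed
  show "monom (coeff p j) j = g * mono e j"
  proof (rule cf_eqI)
    fix a b
    show "cf (monom (coeff p j) j) a b = cf (g * mono e j) a b"
    proof -
      have r: "cf (g * mono e j) a b = (if e \<le> a \<and> j \<le> b then cf g (a - e) (b - j) else 0)"
        by (simp only: mult.commute[of g] cf_monom_mult)
      have l: "cf (monom (coeff p j) j) a b = (if b = j then cf p a j else 0)"
        by (simp add: cf_def coeff_monom)
      show ?thesis unfolding r l using low by (auto simp: cg not_le)
    qed
  qed
qed

lemma Rs_coeff_sub: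
  assumes "p \<in> Vp n" "\<forall>j\<in>Bd - J. coeff p j = 0" "finite J"
  shows "p - (\<Sum>j\<in>J. monom (coeff p j) j) \<in> Rs n Bd"
proof -
  have cs: "coeff (\<Sum>j\<in>J. monom (coeff p j) j) k = (if k \<in> J then coeff p k else 0)" for k
    using assms(3) by (simp add: coeff_sum coeff_monom sum.delta)
  have "p - (\<Sum>j\<in>J. monom (coeff p j) j) \<in> Vp n"
  proof (rule VpI)
    fix i k assume "cf (p - (\<Sum>j\<in>J. monom (coeff p j) j)) i k \<noteq> 0"
    then have "cf p i k \<noteq> 0" by (auto simp: cf_def cs split: if_splits)
    then show "(i + k) mod n = 0" using assms(1) VpD by blast
  qed
  then show ?thesis using assms(2) by (auto simp: Rs_def cs)
qed


lemma arith1: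
  assumes ij: "(i + j) mod 4 = (0::nat)" and jb: "j \<notin> {1,2,5}"
  shows "3 * (i mod 4) \<le> j \<and> (j - 3 * (i mod 4)) mod 4 = 0"
proof -
  define a where "a = i mod 4"
  define d where "d = j div 4"
  define m where "m = j mod 4"
  have jdm: "j = 4 * d + m" by (simp add: d_def m_def)
  have a4: "a < 4" "m < 4" by (simp_all add: a_def m_def)
  have "(a + m) mod 4 = 0" using ij by (simp add: a_def m_def mod_add_eq)
  then have am: "a + m = 0 \<or> a + m = 4"
  proof (cases "a + m < 4")
    case True then show ?thesis using \<open>(a + m) mod 4 = 0\<close> by simp
  next
    case False
    then have "(a + m) mod 4 = (a + m - 4) mod 4" by (simp add: le_mod_geq)
    moreover have "a + m - 4 < 4" using a4 by simp
    ultimately have "a + m - 4 = 0" using \<open>(a + m) mod 4 = 0\<close> by simp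
    then show ?thesis using False by simp
  qed
  have "a = 0 \<or> a = 1 \<or> a = 2 \<or> a = 3" using a4 by auto
  then have "3 * a \<le> j \<and> (j - 3 * a) mod 4 = 0"
  proof (elim disjE)
    assume "a = 0" then have "m = 0" using am a4 by auto
    then show ?thesis using jdm \<open>a = 0\<close> by simp
  next
    assume "a = 1" then have "m = 3" using am by auto
    then have "j - 3 * a = 4 * d" "3 * a \<le> j" using jdm \<open>a = 1\<close> by auto
    then show ?thesis by simp
  next
    assume "a = 2" then have "m = 2" using am by auto
    then have "d \<noteq> 0" using jdm jb by auto
    then have "j - 3 * a = 4 * (d - 1)" "3 * a \<le> j" using jdm \<open>a = 2\<close> \<open>m = 2\<close> by auto
    then show ?thesis by simp
  next
    assume "a = 3" then have "m = 1" using am by auto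
    then have "d \<noteq> 0" "d \<noteq> 1" using jdm jb by auto
    then have "j - 3 * a = 4 * (d - 2)" "3 * a \<le> j" using jdm \<open>a = 3\<close> \<open>m = 1\<close> by auto
    then show ?thesis by simp
  qed
  then show ?thesis by (simp add: a_def)
qed

lemma gb1: "goodBad {1,2,5}"
  unfolding goodBad_def by simp presburger

lemma R1_eq: "kalg {varX ^ 4, varX * varY ^ 3, varY ^ 4} = (emb ` Rs 4 {1,2,5} :: 'k::field poly poly fract set)"
proof (rule kalg_char[OF gb1])
  show "{varX ^ 4, varX * varY ^ 3, varY ^ 4} \<subseteq> (emb ` Rs 4 {1,2,5} :: 'k::field poly poly fract set)"
    unfolding varX_varY_pow unfolding varX_pow varY_pow by (auto intro!: imageI Rs_mono)
next
  fix i j :: nat assume ij: "(i + j) mod 4 = 0" "j \<notin> {1,2,5}"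
  let ?G = "{varX ^ 4, varX * varY ^ 3, varY ^ 4} :: 'k poly poly fract set"
  have rc: "ring_closed (kalg ?G)" by (simp add: kalg_def ring_gen_closed)
  have g: "x \<in> ?G \<Longrightarrow> x \<in> kalg ?G" for x unfolding kalg_def by (rule ring_gen.base) blast
  define u where "u = i mod 4"
  define q where "q = i div 4"
  define v where "v = (j - 3 * u) div 4"
  have ar: "3 * u \<le> j" "(j - 3 * u) mod 4 = 0" using arith1[OF ij] by (simp_all add: u_def)
  have i_eq: "i = q * 4 + u" by (simp add: q_def u_def)
  have "(j - 3 * u) div 4 * 4 = j - 3 * u" using ar(2) div_mult_mod_eq[of "j - 3 * u" 4] by simp
  then have j_eq: "j = u * 3 + v * 4" using ar(1) unfolding v_def by linarith
  have "(mono i j :: 'k poly poly) = mono 4 0 ^ q * mono 1 3 ^ u * mono 0 4 ^ v"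
    by (simp add: mono_pow mono_mult) (simp add: i_eq j_eq)
  then have "emb (mono i j :: 'k poly poly) = (varX ^ 4) ^ q * (varX * varY ^ 3) ^ u * (varY ^ 4) ^ v"
    unfolding varX_varY_pow unfolding varX_pow varY_pow by (simp add: emb_mult emb_pow)
  also have "\<dots> \<in> kalg ?G"
    by (intro ring_closed_mult[OF rc] ring_closed_pow[OF rc] g) auto
  finally show "emb (mono i j) \<in> kalg ?G" .
qed

lemma IC1: "int_closure (emb ` Rs 4 {1,2,5}) = (emb ` Vp 4 :: 'k::field poly poly fract set)"
  by (rule int_closure_Rs[OF gb1, of 8]) auto

lemma strict_R1_35:
  fixes \<alpha> :: "'k::field poly poly fract"
  assumes \<alpha>: "\<alpha> \<in> strict_closure (emb ` Rs 4 {1,2,5}) (emb ` Vp 4)"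
  shows "cf (pol \<alpha>) 3 5 = 0"
proof -
  define \<Phi> :: "'k poly poly fract \<times> 'k poly poly fract \<Rightarrow> 'k" where
    "\<Phi> = (\<lambda>(u, v). cf (pol u) 3 5 * cf (pol v) 0 0 + cf (pol u) 3 1 * cf (pol v) 0 4
          + cf (pol u) 2 2 * cf (pol v) 1 3)"
  let ?B = "emb ` Vp 4 :: 'k poly poly fract set"
  have "\<Phi> (\<alpha>, 1) = \<Phi> (1, \<alpha>)"
  proof (rule functional_strict[OF _ _ _ \<alpha>])
    fix b b' c :: "'k poly poly fract" assume "b \<in> ?B" "b' \<in> ?B" "c \<in> ?B"
    then show "\<Phi> (b + b', c) = \<Phi> (b, c) + \<Phi> (b', c)"
      by (auto simp: \<Phi>_def emb_add[symmetric] algebra_simps)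
  next
    fix b c c' :: "'k poly poly fract" assume "b \<in> ?B" "c \<in> ?B" "c' \<in> ?B"
    then show "\<Phi> (b, c + c') = \<Phi> (b, c) + \<Phi> (b, c')"
      by (auto simp: \<Phi>_def emb_add[symmetric] algebra_simps)
  next
    fix a b c :: "'k poly poly fract" assume "a \<in> emb ` Rs 4 {1,2,5}" "b \<in> ?B" "c \<in> ?B"
    then obtain pa pb pc where abc: "a = emb pa" "b = emb pb" "c = emb pc" and pa: "pa \<in> Rs 4 {1,2,5}" by blast
    note z = Rs_cf0[OF pa]
    show "\<Phi> (a * b, c) = \<Phi> (b, a * c)"
      unfolding abc \<Phi>_def emb_mult[symmetric] pol_emb split
      by (simp add: cf_mult atMost_nat_numeral z algebra_simps)
  qed
  then show ?thesis by (simp add: \<Phi>_def pol_1 cf_1)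
qed

lemma R1_main:
  fixes R :: "'k::field poly poly fract set"
  defines "R \<equiv> emb ` Rs 4 {1,2,5}"
  shows "R \<subset> arf_closure R \<and> arf_closure R = strict_closure R (int_closure R)
       \<and> strict_closure R (int_closure R) = {a + b * (varX ^ 7 * varY ^ 5) | a b. a \<in> R \<and> b \<in> R}"
proof -
  let ?B = "emb ` Vp 4 :: 'k poly poly fract set"
  define w :: "'k poly poly fract" where "w = emb (mono 7 5)"
  have w_eq: "varX ^ 7 * varY ^ 5 = w" by (simp add: w_def varXY)
  define E where "E = {a + b * w | a b. a \<in> R \<and> b \<in> R}"
  have IC: "int_closure R = ?B" unfolding R_def by (rule IC1)
  have rcR: "ring_closed R" unfolding R_def by (rule ring_closed_emb_Rs[OF gb1])
  have rcB: "ring_closed ?B" by (rule ring_closed_emb_Vp)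
  have RB: "R \<subseteq> ?B" unfolding R_def using Rs_Vp by blast
  have oneR: "1 \<in> R" using ring_closed_1[OF rcR] .
  have rcA: "ring_closed (arf_step R)" unfolding arf_step_def by (rule ring_gen_closed)
  have RA: "R \<subseteq> arf_step R" unfolding arf_step_def by (auto intro: ring_gen.base)
  have wstep: "w \<in> arf_step R"
  proof -
    have x: "emb (mono 1 3) \<in> nzd R" unfolding R_def by (intro nzdI emb_mono_ne0 imageI Rs_mono) auto
    have y: "emb (mono 4 4) \<in> R" unfolding R_def by (intro imageI Rs_mono) auto
    have yx: "emb (mono 4 4) / emb (mono 1 3) = emb (mono 3 1)"
      by (rule div_emb) (simp add: emb_mult[symmetric] mono_mult, simp add: mono_def)
    have yx0: "emb (mono 3 1) \<in> int_closure R" unfolding IC by (intro imageI Vp_mono) simp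
    have yx': "emb (mono 4 4) / emb (mono 1 3) \<in> int_closure R" using yx yx0 by metis
    have eqw: "emb (mono 4 4) * emb (mono 4 4) / emb (mono 1 3) = w"
      unfolding w_def emb_mult[symmetric] by (rule div_emb) (simp add: emb_mult[symmetric] mono_mult, simp add: mono_def)
    have m: "w \<in> {y * z / x | x y z. x \<in> nzd R \<and> y \<in> R \<and> z \<in> R \<and>
        y / x \<in> int_closure R \<and> z / x \<in> int_closure R}"
      unfolding mem_Collect_eq
      by (rule exI[of _ "emb (mono 1 3)"], rule exI[of _ "emb (mono 4 4)"], rule exI[of _ "emb (mono 4 4)"])
         (use x y yx' eqw in blast)
    show ?thesis unfolding arf_step_def by (rule ring_gen.base) (use m in blast)
  qed
  have E_arf: "E \<subseteq> arf_step R"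
  proof
    fix e assume "e \<in> E"
    then obtain a b where ab: "e = a + b * w" "a \<in> R" "b \<in> R" by (auto simp: E_def)
    then show "e \<in> arf_step R" using RA wstep
      by (auto intro!: ring_closed_add[OF rcA] ring_closed_mult[OF rcA])
  qed
  have arf1: "arf_step R \<subseteq> arf_closure R"
    using UN_upper[of 1 UNIV "\<lambda>n. (arf_step ^^ n) R"] by (simp add: arf_closure_def)
  have arf_str: "arf_closure R \<subseteq> strict_closure R ?B"
  proof (rule arf_closure_Str[OF rcB])
    show "R \<subseteq> strict_closure R ?B" by (rule A_sub_Str[OF RB rcB])
    show "1 \<in> R" by (rule oneR)
    fix A assume RA': "R \<subseteq> A" "A \<subseteq> strict_closure R ?B"
    then have "A \<subseteq> ?B" by (auto simp: strict_closure_def)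
    then show "int_closure A \<subseteq> ?B" using int_closure_upper RA' oneR by blast
  qed
  have str_E: "strict_closure R ?B \<subseteq> E"
  proof
    fix \<alpha> assume \<alpha>: "\<alpha> \<in> strict_closure R ?B"
    then obtain p where p: "\<alpha> = emb p" "p \<in> Vp 4" by (auto simp: strict_closure_def)
    have \<alpha>': "\<alpha> \<in> strict_closure (emb ` Rs 4 {1,2,5}) ?B" using \<alpha> by (simp add: R_def)
    have c1: "coeff p 1 = 0" using strict_coeff_zero[OF \<alpha>', of 1] p by simp
    have "\<forall>i::nat. 0 < i \<and> i \<le> 2 \<longrightarrow> i \<in> {1,2,5}" by auto
    then have c2: "coeff p 2 = 0" using strict_coeff_zero[OF \<alpha>', of 2] p by simp
    have c3: "cf p 3 5 = 0" using strict_R1_35[OF \<alpha>'] p by simp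
    have low: "\<forall>i<7. cf p i 5 = 0"
    proof (intro allI impI)
      fix i :: nat assume "i < 7"
      then have "i \<in> {0,1,2,3,4,5,6}" by auto
      then show "cf p i 5 = 0" using c3 VpD[OF p(2), of i 5] by auto
    qed
    obtain g where g: "g \<in> Rs 4 {1,2,5}" "monom (coeff p 5) 5 = g * mono 7 5"
      using split_deg[OF p(2) _ low gb1] by auto
    define a where "a = p - (\<Sum>j\<in>{5}. monom (coeff p j) j)"
    have aR: "a \<in> Rs 4 {1,2,5}" unfolding a_def using c1 c2
      by (intro Rs_coeff_sub[OF p(2)]) auto
    have "p = a + g * mono 7 5" using g(2) by (simp add: a_def)
    then have "\<alpha> = emb a + emb g * w" by (simp add: p(1) w_def emb_add emb_mult)
    then show "\<alpha> \<in> E" using aR g(1) by (auto simp: E_def R_def)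
  qed
  have E1: "E = arf_closure R" using E_arf arf1 arf_str str_E by blast
  have E2: "E = strict_closure R ?B" using E_arf arf1 arf_str str_E by blast
  have RE: "R \<subseteq> E"
  proof
    fix a assume aR: "a \<in> R"
    show "a \<in> E" unfolding E_def mem_Collect_eq
      by (rule exI[of _ a], rule exI[of _ 0]) (use \<open>a \<in> R\<close> ring_closed_0[OF rcR] in simp)
  qed
  have wE: "w \<in> E" unfolding E_def mem_Collect_eq
    by (rule exI[of _ 0], rule exI[of _ 1]) (use ring_closed_0[OF rcR] oneR in simp)
  have wR: "w \<notin> R"
  proof
    assume "w \<in> R"
    then obtain q where q: "q \<in> Rs 4 {1,2,5}" "w = emb q" by (auto simp: R_def)
    then have "q = mono 7 5" by (simp add: w_def emb_inj)
    then show False using q(1) by (simp add: Rs_def mono_def coeff_monom)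
  qed
  show ?thesis using E1 E2 RE wE wR IC w_eq by (auto simp: E_def)
qed


lemma arith2:
  assumes ij: "(i + j) mod 5 = (0::nat)" and jb: "j \<notin> {1,2,3,6,7,11}"
  shows "4 * (i mod 5) \<le> j \<and> (j - 4 * (i mod 5)) mod 5 = 0"
proof -
  define a where "a = i mod 5"
  define d where "d = j div 5"
  define m where "m = j mod 5"
  have jdm: "j = 5 * d + m" by (simp add: d_def m_def)
  have a4: "a < 5" "m < 5" by (simp_all add: a_def m_def)
  have "(a + m) mod 5 = 0" using ij by (simp add: a_def m_def mod_add_eq)
  then have am: "a + m = 0 \<or> a + m = 5"
  proof (cases "a + m < 5")
    case True then show ?thesis using \<open>(a + m) mod 5 = 0\<close> by simp
  next
    case False
    then have "(a + m) mod 5 = (a + m - 5) mod 5" by (simp add: le_mod_geq)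
    moreover have "a + m - 5 < 5" using a4 by simp
    ultimately have "a + m - 5 = 0" using \<open>(a + m) mod 5 = 0\<close> by simp
    then show ?thesis using False by simp
  qed
  have "a = 0 \<or> a = 1 \<or> a = 2 \<or> a = 3 \<or> a = 4" using a4 by auto
  then have "4 * a \<le> j \<and> (j - 4 * a) mod 5 = 0"
  proof (elim disjE)
    assume "a = 0" then have "m = 0" using am a4 by auto
    then show ?thesis using jdm \<open>a = 0\<close> by simp
  next
    assume "a = 1" then have "m = 4" using am by auto
    then have "j - 4 * a = 5 * d" "4 * a \<le> j" using jdm \<open>a = 1\<close> by auto
    then show ?thesis by simp
  next
    assume "a = 2" then have "m = 3" using am by auto
    then have "d \<noteq> 0" using jdm jb by auto
    then have "j - 4 * a = 5 * (d - 1)" "4 * a \<le> j" using jdm \<open>a = 2\<close> \<open>m = 3\<close> by auto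
    then show ?thesis by simp
  next
    assume "a = 3" then have "m = 2" using am by auto
    then have "d \<noteq> 0" "d \<noteq> 1" using jdm jb by auto
    then have "j - 4 * a = 5 * (d - 2)" "4 * a \<le> j" using jdm \<open>a = 3\<close> \<open>m = 2\<close> by auto
    then show ?thesis by simp
  next
    assume "a = 4" then have "m = 1" using am by auto
    then have "d \<noteq> 0" "d \<noteq> 1" "d \<noteq> 2" using jdm jb by auto
    then have "j - 4 * a = 5 * (d - 3)" "4 * a \<le> j" using jdm \<open>a = 4\<close> \<open>m = 1\<close> by auto
    then show ?thesis by simp
  qed
  then show ?thesis by (simp add: a_def)
qed

lemma gb2: "goodBad {1,2,3,6,7,11}"
  unfolding goodBad_def by simp presburger

lemma R2_eq: "kalg {varX ^ 5, varX * varY ^ 4, varY ^ 5} = (emb ` Rs 5 {1,2,3,6,7,11} :: 'k::field poly poly fract set)"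
proof (rule kalg_char[OF gb2])
  show "{varX ^ 5, varX * varY ^ 4, varY ^ 5} \<subseteq> (emb ` Rs 5 {1,2,3,6,7,11} :: 'k::field poly poly fract set)"
    unfolding varX_varY_pow unfolding varX_pow varY_pow by (auto intro!: imageI Rs_mono)
next
  fix i j :: nat assume ij: "(i + j) mod 5 = 0" "j \<notin> {1,2,3,6,7,11}"
  let ?G = "{varX ^ 5, varX * varY ^ 4, varY ^ 5} :: 'k poly poly fract set"
  have rc: "ring_closed (kalg ?G)" by (simp add: kalg_def ring_gen_closed)
  have g: "x \<in> ?G \<Longrightarrow> x \<in> kalg ?G" for x unfolding kalg_def by (rule ring_gen.base) blast
  define u where "u = i mod 5"
  define q where "q = i div 5"
  define v where "v = (j - 4 * u) div 5"
  have ar: "4 * u \<le> j" "(j - 4 * u) mod 5 = 0" using arith2[OF ij] by (simp_all add: u_def)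
  have i_eq: "i = q * 5 + u" by (simp add: q_def u_def)
  have "(j - 4 * u) div 5 * 5 = j - 4 * u" using ar(2) div_mult_mod_eq[of "j - 4 * u" 5] by simp
  then have j_eq: "j = u * 4 + v * 5" using ar(1) unfolding v_def by linarith
  have "(mono i j :: 'k poly poly) = mono 5 0 ^ q * mono 1 4 ^ u * mono 0 5 ^ v"
    by (simp add: mono_pow mono_mult) (simp add: i_eq j_eq)
  then have "emb (mono i j :: 'k poly poly) = (varX ^ 5) ^ q * (varX * varY ^ 4) ^ u * (varY ^ 5) ^ v"
    unfolding varX_varY_pow unfolding varX_pow varY_pow by (simp add: emb_mult emb_pow)
  also have "\<dots> \<in> kalg ?G"
    by (intro ring_closed_mult[OF rc] ring_closed_pow[OF rc] g) auto
  finally show "emb (mono i j) \<in> kalg ?G" .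
qed

lemma IC2: "int_closure (emb ` Rs 5 {1,2,3,6,7,11}) = (emb ` Vp 5 :: 'k::field poly poly fract set)"
  by (rule int_closure_Rs[OF gb2, of 15]) auto

lemma strict_R2_46:
  fixes \<alpha> :: "'k::field poly poly fract"
  assumes \<alpha>: "\<alpha> \<in> strict_closure (emb ` Rs 5 {1,2,3,6,7,11}) (emb ` Vp 5)"
  shows "cf (pol \<alpha>) 4 6 = 0"
proof -
  define \<Phi> :: "'k poly poly fract \<times> 'k poly poly fract \<Rightarrow> 'k" where
    "\<Phi> = (\<lambda>(u, v). cf (pol u) 4 6 * cf (pol v) 0 0 + cf (pol u) 4 1 * cf (pol v) 0 5
          + cf (pol u) 3 2 * cf (pol v) 1 4)"
  let ?B = "emb ` Vp 5 :: 'k poly poly fract set"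
  have "\<Phi> (\<alpha>, 1) = \<Phi> (1, \<alpha>)"
  proof (rule functional_strict[OF _ _ _ \<alpha>])
    fix b b' c :: "'k poly poly fract" assume "b \<in> ?B" "b' \<in> ?B" "c \<in> ?B"
    then show "\<Phi> (b + b', c) = \<Phi> (b, c) + \<Phi> (b', c)"
      by (auto simp: \<Phi>_def emb_add[symmetric] algebra_simps)
  next
    fix b c c' :: "'k poly poly fract" assume "b \<in> ?B" "c \<in> ?B" "c' \<in> ?B"
    then show "\<Phi> (b, c + c') = \<Phi> (b, c) + \<Phi> (b, c')"
      by (auto simp: \<Phi>_def emb_add[symmetric] algebra_simps)
  next
    fix a b c :: "'k poly poly fract" assume "a \<in> emb ` Rs 5 {1,2,3,6,7,11}" "b \<in> ?B" "c \<in> ?B"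
    then obtain pa pb pc where abc: "a = emb pa" "b = emb pb" "c = emb pc" and pa: "pa \<in> Rs 5 {1,2,3,6,7,11}" by blast
    note z = Rs_cf0[OF pa]
    show "\<Phi> (a * b, c) = \<Phi> (b, a * c)"
      unfolding abc \<Phi>_def emb_mult[symmetric] pol_emb split
      by (simp add: cf_mult atMost_nat_numeral z algebra_simps)
  qed
  then show ?thesis by (simp add: \<Phi>_def pol_1 cf_1)
qed

lemma strict_R2_37:
  fixes \<alpha> :: "'k::field poly poly fract"
  assumes \<alpha>: "\<alpha> \<in> strict_closure (emb ` Rs 5 {1,2,3,6,7,11}) (emb ` Vp 5)"
  shows "cf (pol \<alpha>) 3 7 = 0"
proof -
  define \<Phi> :: "'k poly poly fract \<times> 'k poly poly fract \<Rightarrow> 'k" where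
    "\<Phi> = (\<lambda>(u, v). cf (pol u) 3 7 * cf (pol v) 0 0 + cf (pol u) 3 2 * cf (pol v) 0 5
          + cf (pol u) 2 3 * cf (pol v) 1 4)"
  let ?B = "emb ` Vp 5 :: 'k poly poly fract set"
  have "\<Phi> (\<alpha>, 1) = \<Phi> (1, \<alpha>)"
  proof (rule functional_strict[OF _ _ _ \<alpha>])
    fix b b' c :: "'k poly poly fract" assume "b \<in> ?B" "b' \<in> ?B" "c \<in> ?B"
    then show "\<Phi> (b + b', c) = \<Phi> (b, c) + \<Phi> (b', c)"
      by (auto simp: \<Phi>_def emb_add[symmetric] algebra_simps)
  next
    fix b c c' :: "'k poly poly fract" assume "b \<in> ?B" "c \<in> ?B" "c' \<in> ?B"
    then show "\<Phi> (b, c + c') = \<Phi> (b, c) + \<Phi> (b, c')"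
      by (auto simp: \<Phi>_def emb_add[symmetric] algebra_simps)
  next
    fix a b c :: "'k poly poly fract" assume "a \<in> emb ` Rs 5 {1,2,3,6,7,11}" "b \<in> ?B" "c \<in> ?B"
    then obtain pa pb pc where abc: "a = emb pa" "b = emb pb" "c = emb pc" and pa: "pa \<in> Rs 5 {1,2,3,6,7,11}" by blast
    note z = Rs_cf0[OF pa]
    show "\<Phi> (a * b, c) = \<Phi> (b, a * c)"
      unfolding abc \<Phi>_def emb_mult[symmetric] pol_emb split
      by (simp add: cf_mult atMost_nat_numeral z algebra_simps)
  qed
  then show ?thesis by (simp add: \<Phi>_def pol_1 cf_1)
qed


lemma R2_main:
  fixes R :: "'k::field poly poly fract set"
  defines "R \<equiv> emb ` Rs 5 {1,2,3,6,7,11}"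
  shows "R \<subset> arf_closure R \<and> arf_closure R = strict_closure R (int_closure R)
       \<and> strict_closure R (int_closure R) =
           {a + b * (varX ^ 9 * varY ^ 6) + c * (varX ^ 8 * varY ^ 7) + d * (varX ^ 4 * varY ^ 11)
              | a b c d. a \<in> R \<and> b \<in> R \<and> c \<in> R \<and> d \<in> R}"
proof -
  let ?B = "emb ` Vp 5 :: 'k poly poly fract set"
  define w1 :: "'k poly poly fract" where "w1 = emb (mono 9 6)"
  define w2 :: "'k poly poly fract" where "w2 = emb (mono 8 7)"
  define w3 :: "'k poly poly fract" where "w3 = emb (mono 4 11)"
  have w_eq: "varX ^ 9 * varY ^ 6 = w1" "varX ^ 8 * varY ^ 7 = w2" "varX ^ 4 * varY ^ 11 = w3"
    by (simp_all add: w1_def w2_def w3_def varXY)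
  define E where "E = {a + b * w1 + c * w2 + d * w3 | a b c d. a \<in> R \<and> b \<in> R \<and> c \<in> R \<and> d \<in> R}"
  have IC: "int_closure R = ?B" unfolding R_def by (rule IC2)
  have rcR: "ring_closed R" unfolding R_def by (rule ring_closed_emb_Rs[OF gb2])
  have rcB: "ring_closed ?B" by (rule ring_closed_emb_Vp)
  have RB: "R \<subseteq> ?B" unfolding R_def using Rs_Vp by blast
  have oneR: "1 \<in> R" using ring_closed_1[OF rcR] .
  have rcA: "ring_closed (arf_step R)" unfolding arf_step_def by (rule ring_gen_closed)
  have RA: "R \<subseteq> arf_step R" unfolding arf_step_def by (auto intro: ring_gen.base)
  have monoR: "emb (mono i j) \<in> R" if "(i + j) mod 5 = 0" "j \<notin> {1,2,3,6,7,11}" for i j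
    unfolding R_def using that by (intro imageI Rs_mono)
  have gen: "y * y / x \<in> arf_step R"
    if x: "x \<in> nzd R" and y: "y \<in> R" and yx: "y / x \<in> int_closure R" for x y
  proof -
    have m: "y * y / x \<in> {y * z / x | x y z. x \<in> nzd R \<and> y \<in> R \<and> z \<in> R \<and>
        y / x \<in> int_closure R \<and> z / x \<in> int_closure R}"
      using x y yx by blast
    show ?thesis unfolding arf_step_def by (rule ring_gen.base) (use m in blast)
  qed
  have nzd_mono: "emb (mono i j) \<in> nzd R" if "(i + j) mod 5 = 0" "j \<notin> {1,2,3,6,7,11}" for i j
    using monoR[OF that] by (intro nzdI emb_mono_ne0)
  have w1A: "w1 \<in> arf_step R"
  proof -
    have yx: "emb (mono 5 5) / emb (mono 1 4) = emb (mono 4 1)"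
      by (rule div_emb) (simp add: emb_mult[symmetric] mono_mult, simp add: mono_def)
    have "emb (mono 5 5) * emb (mono 5 5) / emb (mono 1 4) = w1"
      unfolding w1_def emb_mult[symmetric]
      by (rule div_emb) (simp add: emb_mult[symmetric] mono_mult, simp add: mono_def)
    moreover have "emb (mono 5 5) * emb (mono 5 5) / emb (mono 1 4) \<in> arf_step R"
    proof (rule gen)
      show "emb (mono 5 5) / emb (mono 1 4) \<in> int_closure R"
        unfolding yx IC by (intro imageI Vp_mono) simp
    qed (use nzd_mono[of 1 4] monoR[of 5 5] in auto)
    ultimately show ?thesis by simp
  qed
  have w3A: "w3 \<in> arf_step R"
  proof -
    have yx: "emb (mono 2 8) / emb (mono 0 5) = emb (mono 2 3)"
      by (rule div_emb) (simp add: emb_mult[symmetric] mono_mult, simp add: mono_def)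
    have "emb (mono 2 8) * emb (mono 2 8) / emb (mono 0 5) = w3"
      unfolding w3_def emb_mult[symmetric]
      by (rule div_emb) (simp add: emb_mult[symmetric] mono_mult, simp add: mono_def)
    moreover have "emb (mono 2 8) * emb (mono 2 8) / emb (mono 0 5) \<in> arf_step R"
    proof (rule gen)
      show "emb (mono 2 8) / emb (mono 0 5) \<in> int_closure R"
        unfolding yx IC by (intro imageI Vp_mono) simp
    qed (use nzd_mono[of 0 5] monoR[of 2 8] in auto)
    ultimately show ?thesis by simp
  qed
  have w2A: "w2 \<in> arf_step R"
  proof -
    define xp :: "'k poly poly" where "xp = mono 0 5 + mono 1 4"
    define yp :: "'k poly poly" where "yp = mono 5 5 + mono 2 8"
    define ap :: "'k poly poly" where "ap = mono 2 3 - mono 3 2 + mono 4 1"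
    define Qp :: "'k poly poly" where
      "Qp = mono 7 8 - mono 8 7 + mono 9 6 + mono 4 11 - mono 5 10 + mono 6 9"
    have e1: "ap * xp = yp"
      by (simp add: ap_def xp_def yp_def algebra_simps mono_mult eval_nat_numeral)
    have e2: "yp * yp = Qp * xp"
      by (simp add: Qp_def xp_def yp_def algebra_simps mono_mult eval_nat_numeral)
    have xp0: "xp \<noteq> 0"
    proof
      assume "xp = 0"
      then have "cf xp 0 5 = 0" by simp
      then show False by (simp add: xp_def cf_mono)
    qed
    have xR: "emb xp \<in> nzd R"
    proof (rule nzdI)
      show "emb xp \<in> R" unfolding xp_def emb_add using monoR[of 0 5] monoR[of 1 4]
        by (intro ring_closed_add[OF rcR]) auto
      show "emb xp \<noteq> 0" using xp0 by (simp add: emb_eq0)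
    qed
    have yR: "emb yp \<in> R" unfolding yp_def emb_add using monoR[of 5 5] monoR[of 2 8]
      by (intro ring_closed_add[OF rcR]) auto
    have yx: "emb yp / emb xp = emb ap" by (rule div_emb[OF _ xp0]) (simp add: emb_mult[symmetric] e1)
    have apV: "ap \<in> Vp 5" unfolding ap_def by (intro Vp_add Vp_diff Vp_mono) auto
    have QA: "emb Qp \<in> arf_step R"
    proof -
      have "emb yp * emb yp / emb xp = emb Qp"
        unfolding emb_mult[symmetric] by (rule div_emb[OF _ xp0]) (simp add: emb_mult[symmetric] e2)
      moreover have "emb yp * emb yp / emb xp \<in> arf_step R"
        by (rule gen[OF xR yR]) (unfold yx IC, use apV in blast)
      ultimately show ?thesis by simp
    qed
    have "mono 8 7 = mono 7 8 + mono 9 6 + mono 4 11 - mono 5 10 + mono 6 9 - (Qp :: 'k poly poly)"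
      by (simp add: Qp_def algebra_simps)
    then have "w2 = emb (mono 7 8) + w1 + w3 - emb (mono 5 10) + emb (mono 6 9) - emb Qp"
      by (simp add: w1_def w2_def w3_def emb_add emb_diff)
    also have "\<dots> \<in> arf_step R"
      using RA monoR[of 7 8] monoR[of 5 10] monoR[of 6 9] w1A w3A QA
      by (intro ring_closed_diff[OF rcA] ring_closed_add[OF rcA]) auto
    finally show ?thesis .
  qed
  have E_arf: "E \<subseteq> arf_step R"
  proof
    fix e assume "e \<in> E"
    then obtain a b c d where ab: "e = a + b * w1 + c * w2 + d * w3" "a \<in> R" "b \<in> R" "c \<in> R" "d \<in> R"
      by (auto simp: E_def)
    then show "e \<in> arf_step R" using RA w1A w2A w3A
      by (auto intro!: ring_closed_add[OF rcA] ring_closed_mult[OF rcA])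
  qed
  have arf1: "arf_step R \<subseteq> arf_closure R"
    using UN_upper[of 1 UNIV "\<lambda>n. (arf_step ^^ n) R"] by (simp add: arf_closure_def)
  have arf_str: "arf_closure R \<subseteq> strict_closure R ?B"
  proof (rule arf_closure_Str[OF rcB])
    show "R \<subseteq> strict_closure R ?B" by (rule A_sub_Str[OF RB rcB])
    show "1 \<in> R" by (rule oneR)
    fix A assume RA': "R \<subseteq> A" "A \<subseteq> strict_closure R ?B"
    then have "A \<subseteq> ?B" by (auto simp: strict_closure_def)
    then show "int_closure A \<subseteq> ?B" using int_closure_upper RA' oneR by blast
  qed
  have str_E: "strict_closure R ?B \<subseteq> E"
  proof
    fix \<alpha> assume \<alpha>: "\<alpha> \<in> strict_closure R ?B"
    then obtain p where p: "\<alpha> = emb p" "p \<in> Vp 5" by (auto simp: strict_closure_def)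
    have \<alpha>': "\<alpha> \<in> strict_closure (emb ` Rs 5 {1,2,3,6,7,11}) ?B" using \<alpha> by (simp add: R_def)
    have c1: "coeff p 1 = 0" using strict_coeff_zero[OF \<alpha>', of 1] p by simp
    have "\<forall>i::nat. 0 < i \<and> i \<le> 2 \<longrightarrow> i \<in> {1,2,3,6,7,11}" by auto
    then have c2: "coeff p 2 = 0" using strict_coeff_zero[OF \<alpha>', of 2] p by simp
    have "\<forall>i::nat. 0 < i \<and> i \<le> 3 \<longrightarrow> i \<in> {1,2,3,6,7,11}" by auto
    then have c3: "coeff p 3 = 0" using strict_coeff_zero[OF \<alpha>', of 3] p by simp
    have c46: "cf p 4 6 = 0" using strict_R2_46[OF \<alpha>'] p by simp
    have c37: "cf p 3 7 = 0" using strict_R2_37[OF \<alpha>'] p by simp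
    have low6: "\<forall>i<9. cf p i 6 = 0"
    proof (intro allI impI)
      fix i :: nat assume "i < 9"
      then have "i \<in> {0,1,2,3,4,5,6,7,8}" by auto
      then show "cf p i 6 = 0" using c46 VpD[OF p(2), of i 6] by auto
    qed
    have low7: "\<forall>i<8. cf p i 7 = 0"
    proof (intro allI impI)
      fix i :: nat assume "i < 8"
      then have "i \<in> {0,1,2,3,4,5,6,7}" by auto
      then show "cf p i 7 = 0" using c37 VpD[OF p(2), of i 7] by auto
    qed
    have low11: "\<forall>i<4. cf p i 11 = 0"
    proof (intro allI impI)
      fix i :: nat assume "i < 4"
      then have "i \<in> {0,1,2,3}" by auto
      then show "cf p i 11 = 0" using VpD[OF p(2), of i 11] by auto
    qed
    obtain g1 where g1: "g1 \<in> Rs 5 {1,2,3,6,7,11}" "monom (coeff p 6) 6 = g1 * mono 9 6"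
      using split_deg[OF p(2) _ low6 gb2] by auto
    obtain g2 where g2: "g2 \<in> Rs 5 {1,2,3,6,7,11}" "monom (coeff p 7) 7 = g2 * mono 8 7"
      using split_deg[OF p(2) _ low7 gb2] by auto
    obtain g3 where g3: "g3 \<in> Rs 5 {1,2,3,6,7,11}" "monom (coeff p 11) 11 = g3 * mono 4 11"
      using split_deg[OF p(2) _ low11 gb2] by auto
    define a where "a = p - (\<Sum>j\<in>{6,7,11}. monom (coeff p j) j)"
    have aR: "a \<in> Rs 5 {1,2,3,6,7,11}" unfolding a_def using c1 c2 c3
      by (intro Rs_coeff_sub[OF p(2)]) auto
    have "p = a + g1 * mono 9 6 + g2 * mono 8 7 + g3 * mono 4 11"
      using g1(2) g2(2) g3(2) by (simp add: a_def)
    then have "\<alpha> = emb a + emb g1 * w1 + emb g2 * w2 + emb g3 * w3"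
      by (simp add: p(1) w1_def w2_def w3_def emb_add emb_mult)
    then show "\<alpha> \<in> E" using aR g1(1) g2(1) g3(1) unfolding E_def R_def by blast
  qed
  have E1: "E = arf_closure R" using E_arf arf1 arf_str str_E by blast
  have E2: "E = strict_closure R ?B" using E_arf arf1 arf_str str_E by blast
  have RE: "R \<subseteq> E"
  proof
    fix a assume aR: "a \<in> R"
    show "a \<in> E" unfolding E_def mem_Collect_eq
      by (rule exI[of _ a], rule exI[of _ 0], rule exI[of _ 0], rule exI[of _ 0])
         (use aR ring_closed_0[OF rcR] in simp)
  qed
  have wE: "w1 \<in> E" unfolding E_def mem_Collect_eq
    by (rule exI[of _ 0], rule exI[of _ 1], rule exI[of _ 0], rule exI[of _ 0])
       (use ring_closed_0[OF rcR] oneR in simp)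
  have wR: "w1 \<notin> R"
  proof
    assume "w1 \<in> R"
    then obtain q where q: "q \<in> Rs 5 {1,2,3,6,7,11}" "w1 = emb q" by (auto simp: R_def)
    then have "q = mono 9 6" by (simp add: w1_def emb_inj)
    then show False using q(1) by (simp add: Rs_def mono_def coeff_monom)
  qed
  show ?thesis using E1 E2 RE wE wR IC w_eq by (auto simp: E_def)
qed


theorem mainTheorem14:
  fixes R1 R2 :: "'k::field poly poly fract set"
  defines "R1 \<equiv> kalg {varX ^ 4, varX * varY ^ 3, varY ^ 4}"
      and "R2 \<equiv> kalg {varX ^ 5, varX * varY ^ 4, varY ^ 5}"
  shows "R1 \<subset> arf_closure R1
       \<and> arf_closure R1 = strict_closure R1 (int_closure R1)
       \<and> strict_closure R1 (int_closure R1) =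
           {a + b * (varX ^ 7 * varY ^ 5) | a b. a \<in> R1 \<and> b \<in> R1}
       \<and> R2 \<subset> arf_closure R2
       \<and> arf_closure R2 = strict_closure R2 (int_closure R2)
       \<and> strict_closure R2 (int_closure R2) =
           {a + b * (varX ^ 9 * varY ^ 6) + c * (varX ^ 8 * varY ^ 7) + d * (varX ^ 4 * varY ^ 11)
              | a b c d. a \<in> R2 \<and> b \<in> R2 \<and> c \<in> R2 \<and> d \<in> R2}"
proof -
  have r1: "R1 = emb ` Rs 4 {1,2,5}" unfolding R1_def by (rule R1_eq)
  have r2: "R2 = emb ` Rs 5 {1,2,3,6,7,11}" unfolding R2_def by (rule R2_eq)
  show ?thesis using R1_main[where 'k='k] R2_main[where 'k='k] unfolding r1 r2 by blast
qed

end
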